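(* Let $R$ be a discrete valuation ring with maximal ideal $pR$, $F=R/pR$, and $\eta\colon R^m\to R^n$ a nonzero $R$-homomorphism; let $l$ be the largest integer with $e_l(\eta)\neq0$. (1) Choose subsets $\mathcal{B}_{l+1},\mathcal{B}_l,\dots,\mathcal{B}_0$ of $R^m$ such that $\mathcal{B}_{l+1}\subseteq\ker\eta$, $\mathcal{B}_i\subseteq M_i(\eta)$ for $0\le i\le l$, the reductions $\overline{\mathcal{B}_{l+1}}$ form a basis of $\overline{\ker\eta}$, and for each $i\le l$ the reductions of $\mathcal{B}_i\cup\cdots\cup\mathcal{B}_{l+1}$ form a basis of $\overline{M_i(\eta)}$ extending the chosen basis of $\overline{M_{i+1}(\eta)}$ (with $M_{l+1}$ replaced by $\ker\eta$ at the first step). Then $\mathcal{B}=\bigcup_{i=0}^{l+1}\mathcal{B}_i$ is a left SNF basis for $\eta$. (2) Choose subsets $\mathcal{C}_0,\dots,\mathcal{C}_l$ of $R^n$ with $\mathcal{C}_i\subseteq N_i(\eta)$ such that, for each $i$, the reductions of $\mathcal{C}_0\cup\cdots\cup\mathcal{C}_i$ form a basis of $\overline{N_i(\eta)}$; let $\mathcal{C}_{l+1}$ be any subset of $R^n$ such that $\bigcup_{i=0}^{l+1}\mathcal{C}_i$ is an $R$-basis of $R^n$ (possible since $\bigcup_{i\le l}\mathcal{C}_i$ is a basis of the direct summand $N_l(\eta)$). Then $\mathcal{C}=\bigcup_{i=0}^{l+1}\mathcal{C}_i$ is a right SNF basis for $\eta$.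
   Context: $M_i(\eta)=\{x\in R^m:\eta(x)\in p^iR^n\}$, $N_i(\eta)=\{p^{-i}\eta(x):x\in M_i(\eta)\}$; for an $R$-submodule $L\subseteq R^k$, $\overline{L}=(L+pR^k)/pR^k$. $e_i(\eta)$ is the multiplicity of $p^i$ as an elementary divisor of $\eta$. A left (resp. right) SNF basis for $\eta$ is a basis of $R^m$ (resp. $R^n$) belonging to some pair (basis of $R^m$, basis of $R^n$) with respect to which the matrix of $\eta$ is diagonal. *)

theory Defs
  imports "HOL-Analysis.Finite_Cartesian_Product"
begin

text \<open>R is modelled as a type of class idom; p generates the maximal ideal of the
DVR R: p is a nonzero non-unit and every nonzero element is a unit times a power of p.\<close>
definition dvr_unif :: "'a::idom \<Rightarrow> bool" where
  "dvr_unif p \<longleftrightarrow> p \<noteq> 0 \<and> \<not> p dvd 1 \<and>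
     (\<forall>x. x \<noteq> 0 \<longrightarrow> (\<exists>u k. u dvd 1 \<and> x = u * p ^ k))"

definition smul_set :: "'a::idom \<Rightarrow> ('a ^ 'k) set" where
  "smul_set c = range (\<lambda>y. c *s y)"

definition rbasis :: "('a::idom ^ 'k) set \<Rightarrow> bool" where
  "rbasis S \<longleftrightarrow>
     (\<forall>T c. finite T \<and> T \<subseteq> S \<and> (\<Sum>t\<in>T. c t *s t) = 0 \<longrightarrow> (\<forall>t\<in>T. c t = 0)) \<and>
     (\<forall>x. \<exists>T c. finite T \<and> T \<subseteq> S \<and> x = (\<Sum>t\<in>T. c t *s t))"

text \<open>The reductions mod p of the elements of B form an F-basis of
 (L + pR^k)/pR^k, where F = R/pR (written out in terms of R).\<close>
definition modp_basis :: "'a::idom \<Rightarrow> ('a ^ 'k) set \<Rightarrow> ('a ^ 'k) set \<Rightarrow> bool" where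
  "modp_basis p L B \<longleftrightarrow>
     (\<forall>b\<in>B. \<exists>x\<in>L. b - x \<in> smul_set p) \<and>
     (\<forall>b\<in>B. \<forall>b'\<in>B. b - b' \<in> smul_set p \<longrightarrow> b = b') \<and>
     (\<forall>T c. finite T \<and> T \<subseteq> B \<and> (\<Sum>t\<in>T. c t *s t) \<in> smul_set p \<longrightarrow> (\<forall>t\<in>T. p dvd c t)) \<and>
     (\<forall>x\<in>L. \<exists>T c. finite T \<and> T \<subseteq> B \<and> x - (\<Sum>t\<in>T. c t *s t) \<in> smul_set p)"

text \<open>eta : R^m -> R^n is given by its matrix A, eta x = A *v x.\<close>
definition kerset :: "'a::idom ^ 'm ^ 'n \<Rightarrow> ('a ^ 'm) set" where
  "kerset A = {x. A *v x = 0}"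

definition Mset :: "'a::idom \<Rightarrow> 'a ^ 'm ^ 'n \<Rightarrow> nat \<Rightarrow> ('a ^ 'm) set" where
  "Mset p A i = {x. A *v x \<in> smul_set (p ^ i)}"

definition Nset :: "'a::idom \<Rightarrow> 'a ^ 'm ^ 'n \<Rightarrow> nat \<Rightarrow> ('a ^ 'n) set" where
  "Nset p A i = {y. \<exists>x\<in>Mset p A i. A *v x = p ^ i *s y}"

text \<open>Ordered bases bb (of R^m) and cc (of R^n), indexed by 0..m-1 and 0..n-1, with
respect to which the matrix of eta is diagonal with diagonal entries d.\<close>
definition snf_pair :: "'a::idom ^ 'm::finite ^ 'n::finite \<Rightarrow> (nat \<Rightarrow> 'a ^ 'm) \<Rightarrow> (nat \<Rightarrow> 'a ^ 'n) \<Rightarrow> (nat \<Rightarrow> 'a) \<Rightarrow> bool" where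
  "snf_pair A bb cc d \<longleftrightarrow>
     inj_on bb {..<CARD('m)} \<and> rbasis (bb ` {..<CARD('m)}) \<and>
     inj_on cc {..<CARD('n)} \<and> rbasis (cc ` {..<CARD('n)}) \<and>
     (\<forall>j < min CARD('m) CARD('n). A *v bb j = d j *s cc j) \<and>
     (\<forall>j. min CARD('m) CARD('n) \<le> j \<and> j < CARD('m) \<longrightarrow> A *v bb j = 0)"

definition left_snf_basis :: "'a::idom ^ 'm::finite ^ 'n::finite \<Rightarrow> ('a ^ 'm) set \<Rightarrow> bool" where
  "left_snf_basis A B \<longleftrightarrow> (\<exists>bb cc d. snf_pair A bb cc d \<and> B = bb ` {..<CARD('m)})"

definition right_snf_basis :: "'a::idom ^ 'm::finite ^ 'n::finite \<Rightarrow> ('a ^ 'n) set \<Rightarrow> bool" where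
  "right_snf_basis A C \<longleftrightarrow> (\<exists>bb cc d. snf_pair A bb cc d \<and> C = cc ` {..<CARD('n)})"

text \<open>e_i(eta): number of diagonal entries of (some) Smith normal form associated to p^i.\<close>
definition elem_div_mult :: "'a::idom \<Rightarrow> 'a ^ 'm::finite ^ 'n::finite \<Rightarrow> nat \<Rightarrow> nat" where
  "elem_div_mult p A i =
     (let d = (SOME d. \<exists>bb cc. snf_pair A bb cc d) in
      card {j. j < min CARD('m) CARD('n) \<and> (\<exists>u. u dvd 1 \<and> d j = u * p ^ i)})"

end

theory Submission
  imports Defs
begin


lemma mv_smult: "(A::'a::comm_ring_1^'m^'n) *v (c *s x) = c *s (A *v x)"
  by (simp add: matrix_vector_mult_def vec_eq_iff sum_distrib_left algebra_simps)

lemma mv_sum: "(A::'a::comm_ring_1^'m^'n) *v (\<Sum>i\<in>S. f i) = (\<Sum>i\<in>S. A *v f i)"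
  by (induct S rule: infinite_finite_induct) (simp_all add: matrix_vector_right_distrib)

lemma smult_diff_left: "((a::'a::ring) - b) *s x = a *s x - b *s x"
  by (simp add: vec_eq_iff algebra_simps)
lemma smult_add_left: "((a::'a::ring) + b) *s x = a *s x + b *s x"
  by (simp add: vec_eq_iff algebra_simps)
lemma smult_diff_right: "(a::'a::ring) *s (x - y) = a *s x - a *s y"
  by (simp add: vec_eq_iff algebra_simps)
lemma smult_add_right: "(a::'a::ring) *s (x + y) = a *s x + a *s y"
  by (simp add: vec_eq_iff algebra_simps)
lemma smult_sum_right: "(a::'a::ring) *s (\<Sum>i\<in>S. f i) = (\<Sum>i\<in>S. a *s f i)"
  by (simp add: vec_eq_iff sum_distrib_left)
lemma smult_sum_left: "(\<Sum>i\<in>S. f i) *s (x::'a::ring^'k) = (\<Sum>i\<in>S. f i *s x)"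
  by (simp add: vec_eq_iff sum_distrib_right)
lemma smult_assoc: "(a::'a::ring) *s (b *s x) = (a * b) *s x"
  by (simp add: vec_eq_iff algebra_simps)

lemma smul_set_iff: "(x::'a::idom^'k) \<in> smul_set c \<longleftrightarrow> (\<forall>i. c dvd x$i)"
proof
  assume "x \<in> smul_set c" then show "\<forall>i. c dvd x$i" by (auto simp: smul_set_def)
next
  assume h: "\<forall>i. c dvd x$i"
  define y where "y = (\<chi> i. SOME z. x$i = c * z)"
  have "x = c *s y"
    unfolding vec_eq_iff y_def using h by (auto simp: dvd_def intro: someI_ex)
  then show "x \<in> smul_set c" by (auto simp: smul_set_def)
qed

lemma smul_set_add: "x \<in> smul_set c \<Longrightarrow> y \<in> smul_set c \<Longrightarrow> (x::'a::idom^'k) + y \<in> smul_set c"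
  by (simp add: smul_set_iff)
lemma smul_set_diff: "x \<in> smul_set c \<Longrightarrow> y \<in> smul_set c \<Longrightarrow> (x::'a::idom^'k) - y \<in> smul_set c"
  by (simp add: smul_set_iff)
lemma smul_set_zero[simp]: "(0::'a::idom^'k) \<in> smul_set c"
  by (simp add: smul_set_iff)
lemma smul_set_smult: "x \<in> smul_set c \<Longrightarrow> (a *s x::'a::idom^'k) \<in> smul_set c"
  by (simp add: smul_set_iff)
lemma smul_set_smult2: "c dvd a \<Longrightarrow> (a *s x::'a::idom^'k) \<in> smul_set c"
  by (simp add: smul_set_iff)
lemma smul_set_sum: "(\<And>i. i \<in> S \<Longrightarrow> f i \<in> smul_set c) \<Longrightarrow> (\<Sum>i\<in>S. f i::'a::idom^'k) \<in> smul_set c"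
  by (simp add: smul_set_iff dvd_sum)
lemma smul_set_mono: "x \<in> smul_set (c*d) \<Longrightarrow> (x::'a::idom^'k) \<in> smul_set c"
  by (auto simp add: smul_set_iff intro: dvd_mult_left)
lemma smul_set_one[simp]: "(x::'a::idom^'k) \<in> smul_set 1"
  by (simp add: smul_set_iff)
lemma smul_set_pow_mono: "x \<in> smul_set (p^j) \<Longrightarrow> i \<le> j \<Longrightarrow> (x::'a::idom^'k) \<in> smul_set (p^i)"
  by (auto simp add: smul_set_iff intro: dvd_trans[OF le_imp_power_dvd])
lemma smul_set_self: "(c *s x::'a::idom^'k) \<in> smul_set c"
  by (simp add: smul_set_iff)
lemma smul_set_cancel:
  assumes "(c *s x::'a::idom^'k) \<in> smul_set (c * d)" "c \<noteq> 0"
  shows "x \<in> smul_set d"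
  using assms by (auto simp: smul_set_iff)

section \<open>DVR\<close>

lemma dvr_p0: "dvr_unif p \<Longrightarrow> p \<noteq> 0" by (simp add: dvr_unif_def)
lemma dvr_pnu: "dvr_unif p \<Longrightarrow> \<not> p dvd 1" by (simp add: dvr_unif_def)

lemma dvr_unit:
  assumes "dvr_unif p" "\<not> p dvd x" shows "x dvd 1"
proof -
  have "x \<noteq> 0" using assms(2) by auto
  then obtain u k where u: "u dvd 1" "x = u * p ^ k" using assms(1) unfolding dvr_unif_def by blast
  show ?thesis
  proof (cases k)
    case 0 then show ?thesis using u by simp
  next
    case (Suc k') then have "p dvd x" using u by simp
    then show ?thesis using assms by simp
  qed
qed

lemma dvr_val:
  assumes "dvr_unif p" "x \<noteq> 0" shows "\<exists>k. p^k dvd x \<and> \<not> p^Suc k dvd x"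
proof -
  obtain u k where u: "u dvd 1" "x = u * p ^ k" using assms unfolding dvr_unif_def by blast
  have "\<not> p^Suc k dvd x"
  proof
    assume "p^Suc k dvd x"
    then have "p^k * p dvd p^k * u" using u by (simp add: mult.commute)
    then have "p dvd u" using dvr_p0[OF assms(1)] by simp
    then have "p dvd 1" using u(1) dvd_trans by blast
    then show False using dvr_pnu[OF assms(1)] by simp
  qed
  moreover have "p^k dvd x" using u by simp
  ultimately show ?thesis by blast
qed

lemma dvr_allpow:
  assumes "dvr_unif p" "\<forall>k. p^k dvd x" shows "x = 0"
  using dvr_val[OF assms(1)] assms(2) by blast

lemma dvr_vec_val:
  assumes "dvr_unif p" "(v::'a::idom^'k) \<noteq> 0"
  shows "\<exists>s. v \<in> smul_set (p^s) \<and> v \<notin> smul_set (p^Suc s)"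
proof -
  obtain i where i: "v$i \<noteq> 0" using assms(2) by (auto simp: vec_eq_iff)
  obtain k where "\<not> p^Suc k dvd v$i" using dvr_val[OF assms(1) i] by blast
  then have ex: "\<exists>s. v \<notin> smul_set (p^Suc s)" by (auto simp: smul_set_iff)
  define s where "s = (LEAST s. v \<notin> smul_set (p^Suc s))"
  have 1: "v \<notin> smul_set (p^Suc s)" unfolding s_def by (rule LeastI_ex[OF ex])
  have 2: "v \<in> smul_set (p^s)"
  proof (cases s)
    case 0 then show ?thesis by simp
  next
    case (Suc s')
    then have "s' < s" by simp
    then have "\<not> v \<notin> smul_set (p^Suc s')" unfolding s_def by (rule not_less_Least)
    then show ?thesis using Suc by simp
  qed
  show ?thesis using 1 2 by blast
qed



definition ibasis :: "nat \<Rightarrow> (nat \<Rightarrow> 'a::idom^'k) \<Rightarrow> bool" where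
  "ibasis N f \<longleftrightarrow> (\<forall>c. (\<Sum>j<N. c j *s f j) = 0 \<longrightarrow> (\<forall>j<N. c j = 0)) \<and>
                   (\<forall>x. \<exists>c. x = (\<Sum>j<N. c j *s f j))"

lemma ibasis_span: "ibasis N f \<Longrightarrow> \<exists>c. x = (\<Sum>j<N. c j *s f j)"
  by (simp add: ibasis_def)

lemma ibasis_indep: "ibasis N f \<Longrightarrow> (\<Sum>j<N. c j *s f j) = 0 \<Longrightarrow> j < N \<Longrightarrow> c j = 0"
  by (simp add: ibasis_def)

lemma ibasis_unique:
  assumes "ibasis N f" "(\<Sum>j<N. c j *s f j) = (\<Sum>j<N. e j *s f j)" "j < N"
  shows "c j = e j"
proof -
  have "(\<Sum>j<N. (c j - e j) *s f j) = 0"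
    using assms(2) by (simp add: smult_diff_left sum_subtractf)
  from ibasis_indep[OF assms(1) this assms(3)] show ?thesis by simp
qed

lemma ibasis_dvd:
  assumes "ibasis N f" "(\<Sum>j<N. c j *s f j) \<in> smul_set q" "j < N"
  shows "q dvd c j"
proof -
  obtain w where w: "(\<Sum>j<N. c j *s f j) = q *s w" using assms(2) by (auto simp: smul_set_def)
  obtain e where e: "w = (\<Sum>j<N. e j *s f j)" using ibasis_span[OF assms(1)] by blast
  have "(\<Sum>j<N. c j *s f j) = (\<Sum>j<N. (q * e j) *s f j)"
    using w e by (simp add: smult_sum_right smult_assoc)
  then have "c j = q * e j" by (rule ibasis_unique[OF assms(1) _ assms(3)])
  then show ?thesis by simp
qed

lemma sum_delta_smult:
  assumes "k < (N::nat)"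
  shows "(\<Sum>j<N. (if j = k then a else 0) *s (f j::'a::ring^'n)) = a *s f k"
proof -
  have "(\<Sum>j<N. (if j = k then a else 0) *s f j) = (\<Sum>j<N. if j = k then a *s f j else 0)"
    by (rule sum.cong) auto
  also have "\<dots> = a *s f k" using assms by (simp add: sum.delta)
  finally show ?thesis .
qed

lemma ibasis_inj:
  assumes "ibasis N (f::nat \<Rightarrow> 'a::idom^'k)" shows "inj_on f {..<N}"
proof (rule inj_onI)
  fix i j assume ij: "i \<in> {..<N}" "j \<in> {..<N}" "f i = f j"
  show "i = j"
  proof (rule ccontr)
    assume ne: "i \<noteq> j"
    define c where "c = (\<lambda>k. if k = i then (1::'a) else 0) - (\<lambda>k. if k = j then 1 else 0)"
    have "(\<Sum>k<N. c k *s f k) = (\<Sum>k<N. (if k = i then 1 else 0) *s f k) - (\<Sum>k<N. (if k = j then 1 else 0) *s f k)"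
      unfolding c_def by (simp add: smult_diff_left sum_subtractf)
    also have "\<dots> = 0" using ij by (simp add: sum_delta_smult)
    finally have "c i = 0" using assms ij unfolding ibasis_def by blast
    then show False using ne by (simp add: c_def)
  qed
qed

lemma exch_sum:
  assumes "k < (N::nat)"
  shows "(\<Sum>j<N. c j *s (f(k:=v)) j) = (\<Sum>j<N. (if j = k then 0 else c j) *s (f j::'a::ring^'n)) + c k *s v"
proof -
  have "(\<Sum>j<N. c j *s (f(k:=v)) j) = (\<Sum>j<N. (if j = k then 0 else c j) *s f j + (if j = k then c k *s v else 0))"
    by (rule sum.cong) auto
  also have "\<dots> = (\<Sum>j<N. (if j = k then 0 else c j) *s f j) + c k *s v"
    using assms by (simp add: sum.distrib sum.delta)
  finally show ?thesis .
qed

lemma ibasis_exchange: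
  assumes B: "ibasis N (f::nat \<Rightarrow> 'a::idom^'n)" and k: "k < N" and v: "v = (\<Sum>j<N. b j *s f j)"
    and u: "b k dvd 1"
  shows "ibasis N (f(k:=v))"
proof -
  have key: "(\<Sum>j<N. c j *s (f(k:=v)) j) = (\<Sum>j<N. ((if j = k then 0 else c j) + c k * b j) *s f j)" for c
    unfolding exch_sum[OF k] v by (simp add: smult_sum_right smult_assoc smult_add_left sum.distrib)
  obtain w where w: "b k * w = 1" using u by (metis dvd_def)
  have bk: "b k \<noteq> 0" using w by auto
  show ?thesis unfolding ibasis_def
  proof safe
    fix c j assume h: "(\<Sum>j<N. c j *s (f(k:=v)) j) = 0" and j: "j < N"
    have h2: "\<forall>j<N. (if j = k then 0 else c j) + c k * b j = 0"
      using ibasis_indep[OF B h[unfolded key]] by blast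
    then have "c k * b k = 0" using k by force
    then have ck: "c k = 0" using bk by simp
    show "c j = 0" using h2 j ck by (cases "j = k") force+
  next
    fix x
    obtain c where c: "x = (\<Sum>j<N. c j *s f j)" using ibasis_span[OF B] by blast
    define e where "e = (\<lambda>j. if j = k then c k * w else c j - c k * w * b j)"
    have "x = (\<Sum>j<N. ((if j = k then 0 else e j) + e k * b j) *s f j)"
      unfolding c
    proof (rule sum.cong)
      fix j assume "j \<in> {..<N}"
      have w': "w * b k = 1" using w by (simp add: mult.commute)
      show "c j *s f j = ((if j = k then 0 else e j) + e k * b j) *s f j"
        by (cases "j = k") (simp_all add: e_def mult.assoc w')
    qed simp
    then show "\<exists>e. x = (\<Sum>j<N. e j *s (f(k:=v)) j)" unfolding key[symmetric] by (rule exI[of _ e])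
  qed
qed

lemma ibasis_permute:
  assumes B: "ibasis N f" and s: "bij_betw g {..<N} {..<N}"
  shows "ibasis N (f \<circ> g)"
proof -
  have bij: "bij_betw g {..<N} {..<N}" using s .
  have iv1: "inv_into {..<N} g (g j) = j" if "j < N" for j using bij that by (simp add: bij_betw_inv_into_left)
  have iv2: "g (inv_into {..<N} g j) = j" if "j < N" for j using bij that by (simp add: bij_betw_inv_into_right)
  have iv3: "inv_into {..<N} g j < N" if "j < N" for j using bij that by (meson bij_betwE bij_betw_inv_into lessThan_iff)
  have key: "(\<Sum>j<N. c j *s (f \<circ> g) j) = (\<Sum>j<N. c (inv_into {..<N} g j) *s f j)" for c
  proof -
    have "(\<Sum>j<N. c (inv_into {..<N} g j) *s f j) = (\<Sum>j<N. c (inv_into {..<N} g (g j)) *s f (g j))"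
      using sum.reindex_bij_betw[OF bij, of "\<lambda>j. c (inv_into {..<N} g j) *s f j"] by simp
    also have "\<dots> = (\<Sum>j<N. c j *s (f \<circ> g) j)" using iv1 by simp
    finally show ?thesis by simp
  qed
  show ?thesis unfolding ibasis_def
  proof safe
    fix c j assume h: "(\<Sum>j<N. c j *s (f \<circ> g) j) = 0" and j: "j < N"
    have "\<forall>j<N. c (inv_into {..<N} g j) = 0" using ibasis_indep[OF B h[unfolded key]] by blast
    moreover have "g j < N" using j s by (meson lessThan_iff bij_betwE)
    ultimately show "c j = 0" using iv1 j by metis
  next
    fix x
    obtain c where c: "x = (\<Sum>j<N. c j *s f j)" using ibasis_span[OF B] by blast
    have "x = (\<Sum>j<N. (c \<circ> g) (inv_into {..<N} g j) *s f j)" unfolding c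
      by (rule sum.cong) (auto simp: iv2)
    then show "\<exists>c. x = (\<Sum>j<N. c j *s (f \<circ> g) j)" unfolding key by (rule exI[of _ "c \<circ> g"])
  qed
qed

lemma ibasis_shear:
  assumes B: "ibasis N (f::nat \<Rightarrow> 'a::idom^'n)" and k: "k < N" and bk: "\<beta> k = 0"
  shows "ibasis N (\<lambda>j. f j - \<beta> j *s f k)"
proof -
  have key: "(\<Sum>j<N. c j *s (f j - \<beta> j *s f k)) = (\<Sum>j<N. (c j - (if j = k then (\<Sum>i<N. c i * \<beta> i) else 0)) *s f j)" for c
    using k by (simp add: smult_diff_right smult_diff_left sum_subtractf sum_delta_smult smult_assoc smult_sum_left)
  show ?thesis unfolding ibasis_def
  proof safe
    fix c j assume h: "(\<Sum>j<N. c j *s (f j - \<beta> j *s f k)) = 0" and j: "j < N"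
    have h2: "\<forall>j<N. c j - (if j = k then (\<Sum>i<N. c i * \<beta> i) else 0) = 0"
      using ibasis_indep[OF B h[unfolded key]] by blast
    have "(\<Sum>i<N. c i * \<beta> i) = (\<Sum>i<N. if i = k then c k * \<beta> k else 0)"
      by (rule sum.cong) (use h2 in auto)
    also have "\<dots> = 0" using bk by simp
    finally have "c k = 0" using h2 k by force
    then show "c j = 0" using h2 j by (cases "j = k") force+
  next
    fix x
    obtain c where c: "x = (\<Sum>j<N. c j *s f j)" using ibasis_span[OF B] by blast
    define e where "e = (\<lambda>j. c j + (if j = k then (\<Sum>i<N. c i * \<beta> i) else 0))"
    have s: "(\<Sum>i<N. e i * \<beta> i) = (\<Sum>i<N. c i * \<beta> i)"
      by (rule sum.cong) (auto simp: e_def bk)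
    have "x = (\<Sum>j<N. (e j - (if j = k then (\<Sum>i<N. e i * \<beta> i) else 0)) *s f j)"
      unfolding c s by (rule sum.cong) (auto simp: e_def)
    then show "\<exists>e. x = (\<Sum>j<N. e j *s (f j - \<beta> j *s f k))" unfolding key[symmetric] by (rule exI[of _ e])
  qed
qed

lemma ibasis_std: "\<exists>f. ibasis CARD('k::finite) (f :: nat \<Rightarrow> 'a::idom^'k)"
proof -
  obtain en where en: "bij_betw en {0..<CARD('k)} (UNIV::'k set)"
    using ex_bij_betw_nat_finite[of "UNIV::'k set"] by auto
  have en': "bij_betw en {..<CARD('k)} (UNIV::'k set)" using en by (simp add: atLeast0LessThan)
  define f where "f = (\<lambda>j. axis (en j) (1::'a))"
  have key: "(\<Sum>j<CARD('k). c j *s f j) = (\<chi> i. c (inv_into {..<CARD('k)} en i))" for c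
  proof -
    have "(\<Sum>j<CARD('k). c j *s f j) = (\<Sum>j<CARD('k). c (inv_into {..<CARD('k)} en (en j)) *s axis (en j) 1)"
      unfolding f_def by (rule sum.cong) (use en' in \<open>auto simp: bij_betw_inv_into_left\<close>)
    also have "\<dots> = (\<Sum>i\<in>UNIV. c (inv_into {..<CARD('k)} en i) *s axis i 1)"
      using sum.reindex_bij_betw[OF en', of "\<lambda>i. c (inv_into {..<CARD('k)} en i) *s axis i 1"] by simp
    also have "\<dots> = (\<chi> i. c (inv_into {..<CARD('k)} en i))"
      using basis_expansion[of "\<chi> i. c (inv_into {..<CARD('k)} en i)"] by simp
    finally show ?thesis .
  qed
  have "ibasis CARD('k) f" unfolding ibasis_def
  proof safe
    fix c j assume h: "(\<Sum>j<CARD('k). c j *s f j) = 0" and j: "j < CARD('k)"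
    have "(\<chi> i. c (inv_into {..<CARD('k)} en i)) $ en j = 0" using h unfolding key by simp
    then show "c j = 0" using j en' by (simp add: bij_betw_inv_into_left)
  next
    fix x :: "'a^'k"
    have "x = (\<Sum>j<CARD('k). (\<lambda>j. x $ en j) j *s f j)" unfolding key
      using en' by (simp add: vec_eq_iff bij_betw_inv_into_right)
    then show "\<exists>c. x = (\<Sum>j<CARD('k). c j *s f j)" by (rule exI[of _ "\<lambda>j. x $ en j"])
  qed
  then show ?thesis by blast
qed



definition pind :: "'a::idom \<Rightarrow> ('a^'k) set \<Rightarrow> bool" where
  "pind p S \<longleftrightarrow> (\<forall>T c. finite T \<and> T \<subseteq> S \<and> (\<Sum>t\<in>T. c t *s t) \<in> smul_set p \<longrightarrow> (\<forall>t\<in>T. p dvd c t))"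

lemma pindD: "pind p S \<Longrightarrow> finite T \<Longrightarrow> T \<subseteq> S \<Longrightarrow> (\<Sum>t\<in>T. c t *s t) \<in> smul_set p \<Longrightarrow> t \<in> T \<Longrightarrow> p dvd c t"
  unfolding pind_def by blast

lemma pind_mono: "pind p S \<Longrightarrow> S' \<subseteq> S \<Longrightarrow> pind p S'"
  unfolding pind_def by blast

lemma modp_basis_pind: "modp_basis p L B \<Longrightarrow> pind p B"
  unfolding modp_basis_def pind_def by blast

lemma set_to_idx:
  assumes inj: "inj_on f {..<N::nat}" and T: "T \<subseteq> f ` {..<N}"
  shows "(\<Sum>t\<in>T. c t *s t) = (\<Sum>j<N. (if f j \<in> T then c (f j) else 0) *s (f j::'a::ring^'k))"
proof -
  have "(\<Sum>j<N. (if f j \<in> T then c (f j) else 0) *s f j) = (\<Sum>j\<in>{j\<in>{..<N}. f j \<in> T}. c (f j) *s f j)"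
    by (rule sum.mono_neutral_cong_right) auto
  also have "\<dots> = (\<Sum>t\<in>f ` {j\<in>{..<N}. f j \<in> T}. c t *s t)"
    by (rule sum.reindex[symmetric, unfolded comp_def]) (rule inj_on_subset[OF inj], auto)
  also have "f ` {j\<in>{..<N}. f j \<in> T} = T" using T by auto
  finally show ?thesis by simp
qed

lemma ibasis_pind:
  assumes B: "ibasis N f" shows "pind q (f ` {..<N})"
  unfolding pind_def
proof safe
  fix T c t assume T: "finite T" "T \<subseteq> f ` {..<N}" and s: "(\<Sum>t\<in>T. c t *s t) \<in> smul_set q" and t: "t \<in> T"
  obtain j where j: "j < N" "t = f j" using T t by auto
  have "q dvd (if f j \<in> T then c (f j) else 0)"
    using ibasis_dvd[OF B _ j(1), of "\<lambda>j. if f j \<in> T then c (f j) else 0"] s unfolding set_to_idx[OF ibasis_inj[OF B] T(2)] by blast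
  then show "q dvd c t" using j t by simp
qed

lemma ibasis_rbasis:
  assumes B: "ibasis N f" shows "rbasis (f ` {..<N})"
  unfolding rbasis_def
proof safe
  fix T c t assume T: "finite T" "T \<subseteq> f ` {..<N}" and s: "(\<Sum>t\<in>T. c t *s t) = 0" and t: "t \<in> T"
  obtain j where j: "j < N" "t = f j" using T t by auto
  have "(if f j \<in> T then c (f j) else 0) = 0"
    using ibasis_indep[OF B _ j(1), of "\<lambda>j. if f j \<in> T then c (f j) else 0"] s unfolding set_to_idx[OF ibasis_inj[OF B] T(2)] by blast
  then show "c t = 0" using j t by simp
next
  fix x
  obtain c where c: "x = (\<Sum>j<N. c j *s f j)" using ibasis_span[OF B] by blast
  define d where "d = (\<lambda>t. c (inv_into {..<N} f t))"
  have "(\<Sum>t\<in>f ` {..<N}. d t *s t) = (\<Sum>j<N. (if f j \<in> f ` {..<N} then d (f j) else 0) *s f j)"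
    by (rule set_to_idx[OF ibasis_inj[OF B]]) simp
  also have "\<dots> = x" unfolding c d_def
    by (rule sum.cong) (auto simp: inv_into_f_f[OF ibasis_inj[OF B]])
  finally show "\<exists>T c. finite T \<and> T \<subseteq> f ` {..<N} \<and> x = (\<Sum>t\<in>T. c t *s t)"
    by (intro exI[of _ "f ` {..<N}"] exI[of _ d]) auto
qed

lemma rbasis_ibasis:
  assumes inj: "inj_on f {..<N}" and R: "rbasis (f ` {..<N})" shows "ibasis N f"
  unfolding ibasis_def
proof safe
  fix c j assume s: "(\<Sum>j<N. c j *s f j) = 0" and j: "j < N"
  define d where "d = (\<lambda>t. c (inv_into {..<N} f t))"
  have "(\<Sum>t\<in>f ` {..<N}. d t *s t) = (\<Sum>j<N. (if f j \<in> f ` {..<N} then d (f j) else 0) *s f j)"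
    by (rule set_to_idx[OF inj]) simp
  also have "\<dots> = (\<Sum>j<N. c j *s f j)" unfolding d_def
    by (rule sum.cong) (auto simp: inv_into_f_f[OF inj])
  finally have "(\<Sum>t\<in>f ` {..<N}. d t *s t) = 0" using s by simp
  then have "d (f j) = 0" using R j unfolding rbasis_def by blast
  then show "c j = 0" using j inj by (simp add: d_def inv_into_f_f)
next
  fix x
  obtain T c where T: "finite T" "T \<subseteq> f ` {..<N}" "x = (\<Sum>t\<in>T. c t *s t)" using R unfolding rbasis_def by blast
  have "x = (\<Sum>j<N. (\<lambda>j. if f j \<in> T then c (f j) else 0) j *s f j)"
    using set_to_idx[OF inj T(2)] T(3) by simp
  then show "\<exists>c. x = (\<Sum>j<N. c j *s f j)" by (rule exI[of _ "\<lambda>j. if f j \<in> T then c (f j) else 0"])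
qed

lemma exch_ext:
  assumes dvr: "dvr_unif p" and B: "ibasis N (f::nat \<Rightarrow> 'a::idom^'k)" and S: "finite S" "pind p (S::('a^'k) set)"
  shows "\<exists>g. ibasis N g \<and> S \<subseteq> g ` {..<N}"
  using S
proof (induction S rule: finite_induct)
  case empty show ?case by (rule exI[of _ f]) (simp add: B)
next
  case (insert s S)
  obtain g' where g': "ibasis N g'" "S \<subseteq> g' ` {..<N}"
    using insert pind_mono[OF insert.prems] by blast
  have inj: "inj_on g' {..<N}" by (rule ibasis_inj[OF g'(1)])
  obtain \<beta> where \<beta>: "s = (\<Sum>j<N. \<beta> j *s g' j)" using ibasis_span[OF g'(1)] by blast
  have "\<exists>j0<N. g' j0 \<notin> S \<and> \<not> p dvd \<beta> j0"
  proof (rule ccontr)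
    assume "\<not> ?thesis"
    then have all: "\<And>j. j < N \<Longrightarrow> g' j \<notin> S \<Longrightarrow> p dvd \<beta> j" by blast
    define c where "c = (\<lambda>t. if t = s then 1 else - \<beta> (inv_into {..<N} g' t))"
    have sS: "(\<Sum>t\<in>S. c t *s t) = (\<Sum>j<N. (if g' j \<in> S then - \<beta> j else 0) *s g' j)"
      unfolding set_to_idx[OF inj g'(2)]
      by (rule sum.cong) (use insert.hyps(2) in \<open>auto simp: c_def inv_into_f_f[OF inj]\<close>)
    have "(\<Sum>t\<in>insert s S. c t *s t) = s + (\<Sum>t\<in>S. c t *s t)"
      using insert.hyps by (simp add: c_def)
    also have "\<dots> = (\<Sum>j<N. (if g' j \<in> S then 0 else \<beta> j) *s g' j)"
      unfolding sS \<beta> sum.distrib[symmetric] by (rule sum.cong) (auto simp: smult_add_left[symmetric])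
    also have "\<dots> \<in> smul_set p"
      by (rule smul_set_sum) (auto intro!: smul_set_smult2 all)
    finally have "p dvd c s" using insert.prems insert.hyps(1) by (intro pindD[of p "insert s S" "insert s S"]) auto
    then show False using dvr_pnu[OF dvr] by (simp add: c_def)
  qed
  then obtain j0 where j0: "j0 < N" "g' j0 \<notin> S" "\<not> p dvd \<beta> j0" by blast
  have gb: "ibasis N (g'(j0 := s))"
    by (rule ibasis_exchange[OF g'(1) j0(1) \<beta> dvr_unit[OF dvr j0(3)]])
  have "insert s S \<subseteq> (g'(j0 := s)) ` {..<N}"
  proof
    fix t assume "t \<in> insert s S"
    then show "t \<in> (g'(j0 := s)) ` {..<N}"
    proof
      assume "t = s" then show ?thesis using j0 by (auto intro!: image_eqI[of _ _ j0])
    next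
      assume "t \<in> S"
      then obtain j where j: "j < N" "t = g' j" using g'(2) by auto
      then have "j \<noteq> j0" using j0(2) \<open>t \<in> S\<close> by auto
      then show ?thesis using j by (auto intro!: image_eqI[of _ _ j])
    qed
  qed
  then show ?case using gb by blast
qed

lemma pind_card:
  assumes dvr: "dvr_unif p" and B: "ibasis N (f::nat \<Rightarrow> 'a::idom^'k)" and S: "pind p (S::('a^'k) set)"
  shows "finite S \<and> card S \<le> N"
proof -
  have fin: "card S' \<le> N" if fS: "finite S'" "S' \<subseteq> S" for S'
  proof -
    obtain g where g: "S' \<subseteq> g ` {..<N}" using exch_ext[OF dvr B fS(1) pind_mono[OF S fS(2)]] by blast
    have "card S' \<le> card (g ` {..<N})" by (rule card_mono[OF _ g]) simp
    also have "\<dots> \<le> N" using card_image_le[of "{..<N}" g] by simp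
    finally show ?thesis .
  qed
  have "finite S"
  proof (rule ccontr)
    assume "infinite S"
    then obtain S' where "finite S'" "card S' = Suc N" "S' \<subseteq> S" using infinite_arbitrarily_large by blast
    then show False using fin by fastforce
  qed
  then show ?thesis using fin by blast
qed



definition tspan :: "nat \<Rightarrow> nat \<Rightarrow> (nat \<Rightarrow> 'a::idom^'k) \<Rightarrow> ('a^'k) set" where
  "tspan k N f = {x. \<exists>e. x = (\<Sum>j\<in>{k..<N}. e j *s f j)}"

lemma tspanI: "x = (\<Sum>j\<in>{k..<N}. e j *s f j) \<Longrightarrow> x \<in> tspan k N f"
  unfolding tspan_def by blast

lemma tspan_zero[simp]: "0 \<in> tspan k N f"
  unfolding tspan_def by (auto intro!: exI[of _ "\<lambda>_. 0"])

lemma tspan_add: "x \<in> tspan k N f \<Longrightarrow> y \<in> tspan k N f \<Longrightarrow> x + y \<in> tspan k N f"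
proof -
  assume "x \<in> tspan k N f" "y \<in> tspan k N f"
  then obtain e e' where "x = (\<Sum>j\<in>{k..<N}. e j *s f j)" "y = (\<Sum>j\<in>{k..<N}. e' j *s f j)"
    unfolding tspan_def by blast
  then have "x + y = (\<Sum>j\<in>{k..<N}. (e j + e' j) *s f j)" by (simp add: smult_add_left sum.distrib)
  then show ?thesis by (rule tspanI)
qed

lemma tspan_smult: "x \<in> tspan k N f \<Longrightarrow> c *s x \<in> tspan k N f"
proof -
  assume "x \<in> tspan k N f"
  then obtain e where "x = (\<Sum>j\<in>{k..<N}. e j *s f j)" unfolding tspan_def by blast
  then have "c *s x = (\<Sum>j\<in>{k..<N}. (c * e j) *s f j)" by (simp add: smult_sum_right smult_assoc)
  then show ?thesis by (rule tspanI)
qed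

lemma tspan_diff: "x \<in> tspan k N f \<Longrightarrow> y \<in> tspan k N f \<Longrightarrow> x - y \<in> tspan k N f"
proof -
  assume "x \<in> tspan k N f" "y \<in> tspan k N f"
  then have "x + (-1) *s y \<in> tspan k N f" by (intro tspan_add tspan_smult)
  moreover have "x + (-1) *s y = x - y" by (simp add: vec_eq_iff)
  ultimately show ?thesis by simp
qed

lemma tspan_sum: "(\<And>i. i \<in> S \<Longrightarrow> g i \<in> tspan k N f) \<Longrightarrow> (\<Sum>i\<in>S. g i) \<in> tspan k N f"
  by (induct S rule: infinite_finite_induct) (auto intro: tspan_add)

lemma tspan_elem: "j \<in> {k..<N} \<Longrightarrow> f j \<in> tspan k N f"
proof -
  assume j: "j \<in> {k..<N}"
  have "f j = (\<Sum>i\<in>{k..<N}. (if i = j then 1 else 0) *s f i)"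
    using j by (simp add: if_distrib[of "\<lambda>c. c *s f _"] cong: if_cong)
  then show ?thesis by (rule tspanI)
qed

lemma tspan_sub:
  assumes "\<And>j. j \<in> {k..<N} \<Longrightarrow> g j \<in> tspan k N f"
  shows "tspan k N g \<subseteq> tspan k N f"
proof
  fix x assume "x \<in> tspan k N g"
  then obtain e where e: "x = (\<Sum>j\<in>{k..<N}. e j *s g j)" unfolding tspan_def by blast
  show "x \<in> tspan k N f" unfolding e by (rule tspan_sum) (rule tspan_smult, rule assms)
qed

lemma tspan_coord:
  "(\<Sum>j\<in>{k..<N::nat}. e j *s (f j::'a::ring^'n)) = (\<Sum>j<N. (if k \<le> j then e j else 0) *s f j)"
proof -
  have "(\<Sum>j<N. (if k \<le> j then e j else 0) *s f j) = (\<Sum>j<N. if j \<in> {k..<N} then e j *s f j else 0)"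
    by (rule sum.cong) auto
  also have "\<dots> = (\<Sum>j\<in>{..<N} \<inter> {k..<N}. e j *s f j)" by (rule sum.inter_restrict[symmetric]) simp
  also have "{..<N} \<inter> {k..<N} = {k..<N}" by auto
  finally show ?thesis by simp
qed

lemma tspan_full: "ibasis N f \<Longrightarrow> x \<in> tspan 0 N f"
  unfolding tspan_def using ibasis_span[of N f x] by (simp add: atLeast0LessThan)

lemma tspan_A:
  assumes "\<And>i. k \<le> i \<Longrightarrow> i < M \<Longrightarrow> (A::'a::idom^'m^'n) *v bb i \<in> tspan k N cc"
    and "x \<in> tspan k M bb"
  shows "A *v x \<in> tspan k N cc"
proof -
  obtain e where e: "x = (\<Sum>j\<in>{k..<M}. e j *s bb j)" using assms(2) unfolding tspan_def by blast
  show ?thesis unfolding e mv_sum mv_smult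
    by (rule tspan_sum) (rule tspan_smult, rule assms(1), auto)
qed

definition sw :: "nat \<Rightarrow> nat \<Rightarrow> nat \<Rightarrow> nat" where
  "sw a b x = (if x = a then b else if x = b then a else x)"

lemma sw_sw[simp]: "sw a b (sw a b x) = x" by (simp add: sw_def)

lemma sw_bij: "a < N \<Longrightarrow> b < N \<Longrightarrow> bij_betw (sw a b) {..<N} {..<N}"
  by (rule bij_betw_byWitness[of _ "sw a b"]) (auto simp: sw_def)

lemma sum_reindex_bij:
  assumes "bij_betw g {..<N} {..<N}"
  shows "(\<Sum>j<N. c j *s (f j::'a::ring^'k)) = (\<Sum>j<N. c (g j) *s f (g j))"
  using sum.reindex_bij_betw[OF assms, of "\<lambda>j. c j *s f j"] by simp

definition Inv :: "'a::idom^'m::finite^'n::finite \<Rightarrow> nat \<Rightarrow> (nat \<Rightarrow> 'a^'m) \<Rightarrow> (nat \<Rightarrow> 'a^'n) \<Rightarrow> (nat \<Rightarrow> 'a) \<Rightarrow> bool" where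
  "Inv A k bb cc d \<longleftrightarrow> ibasis CARD('m) bb \<and> ibasis CARD('n) cc \<and> (\<forall>j<k. A *v bb j = d j *s cc j) \<and>
     (\<forall>i. k \<le> i \<and> i < CARD('m) \<longrightarrow> A *v bb i \<in> tspan k CARD('n) cc)"



lemma snf_step:
  fixes A :: "'a::idom^'m::finite^'n::finite" and p :: 'a
  assumes dvr: "dvr_unif p" and k: "k < CARD('m)" "k < CARD('n)" and I: "Inv A k bb cc d"
  shows "\<exists>bb' cc' d'. Inv A (Suc k) bb' cc' d'"
proof -
  let ?m = "CARD('m)" and ?n = "CARD('n)"
  have bb: "ibasis ?m bb" and cc: "ibasis ?n cc" and dj: "\<forall>j<k. A *v bb j = d j *s cc j"
    and tl: "\<And>i. k \<le> i \<Longrightarrow> i < ?m \<Longrightarrow> A *v bb i \<in> tspan k ?n cc"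
    using I unfolding Inv_def by auto
  show ?thesis
  proof (cases "\<forall>i. k \<le> i \<and> i < ?m \<longrightarrow> A *v bb i = 0")
    case True
    have "Inv A (Suc k) bb cc (d(k := 0))" unfolding Inv_def
      using bb cc dj True k by (auto simp: less_Suc_eq)
    then show ?thesis by blast
  next
    case False
    then obtain i0 where i0: "k \<le> i0" "i0 < ?m" "A *v bb i0 \<noteq> 0" by blast
    define T where "T = tspan k ?m bb"
    have AT: "A *v x \<in> tspan k ?n cc" if "x \<in> T" for x
      using tspan_A[OF tl that[unfolded T_def]] by blast
    define P where "P = (\<lambda>s. \<exists>x\<in>T. A *v x \<notin> smul_set (p^Suc s))"
    obtain s1 where "A *v bb i0 \<notin> smul_set (p^Suc s1)" using dvr_vec_val[OF dvr i0(3)] by blast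
    moreover have "bb i0 \<in> T" unfolding T_def using i0 by (intro tspan_elem) auto
    ultimately have exP: "\<exists>s. P s" unfolding P_def by blast
    define s0 where "s0 = (LEAST s. P s)"
    have Ps0: "P s0" unfolding s0_def by (rule LeastI_ex[OF exP])
    have mins: "A *v x \<in> smul_set (p^s0)" if "x \<in> T" for x
    proof (cases s0)
      case 0 then show ?thesis by simp
    next
      case (Suc s')
      then have "\<not> P s'" unfolding s0_def using not_less_Least[of s' P] by simp
      then show ?thesis using that Suc unfolding P_def by blast
    qed
    obtain x0 where x0: "x0 \<in> T" "A *v x0 \<notin> smul_set (p^Suc s0)" using Ps0 unfolding P_def by blast
    obtain y where y: "A *v x0 = p^s0 *s y" using mins[OF x0(1)] unfolding smul_set_def by blast
    have ynp: "y \<notin> smul_set p"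
    proof
      assume "y \<in> smul_set p"
      then obtain z where "y = p *s z" unfolding smul_set_def by blast
      then have "A *v x0 = p^Suc s0 *s z" using y by (simp add: smult_assoc mult.commute)
      then show False using x0(2) smul_set_self by metis
    qed
    obtain \<xi> where \<xi>: "x0 = (\<Sum>j\<in>{k..<?m}. \<xi> j *s bb j)" using x0(1) unfolding T_def tspan_def by blast
    have "\<exists>i1\<in>{k..<?m}. \<not> p dvd \<xi> i1"
    proof (rule ccontr)
      assume "\<not> ?thesis"
      then have "\<forall>j\<in>{k..<?m}. \<exists>z. \<xi> j = p * z" by (auto simp: dvd_def)
      then obtain \<xi>' where \<xi>': "\<forall>j\<in>{k..<?m}. \<xi> j = p * \<xi>' j" by metis
      define x1 where "x1 = (\<Sum>j\<in>{k..<?m}. \<xi>' j *s bb j)"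
      have "x1 \<in> T" unfolding T_def x1_def by (rule tspanI) simp
      then obtain w where w: "A *v x1 = p^s0 *s w" using mins unfolding smul_set_def by blast
      have "x0 = p *s x1" unfolding \<xi> x1_def smult_sum_right smult_assoc using \<xi>' by simp
      then have "A *v x0 = p^Suc s0 *s w" by (simp add: mv_smult w smult_assoc)
      then show False using x0(2) smul_set_self by metis
    qed
    then obtain i1 where i1: "k \<le> i1" "i1 < ?m" "\<not> p dvd \<xi> i1" by auto
    obtain \<alpha> where \<alpha>: "A *v x0 = (\<Sum>j\<in>{k..<?n}. \<alpha> j *s cc j)" using AT[OF x0(1)] unfolding tspan_def by blast
    obtain \<psi> where \<psi>: "y = (\<Sum>j<?n. \<psi> j *s cc j)" using ibasis_span[OF cc] by blast
    have p0: "p^s0 \<noteq> 0" using dvr_p0[OF dvr] by simp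
    have \<psi>0: "\<psi> j = 0" if "j < k" for j
    proof -
      have "(\<Sum>j<?n. (p^s0 * \<psi> j) *s cc j) = (\<Sum>j<?n. (if k \<le> j then \<alpha> j else 0) *s cc j)"
        using y \<alpha> unfolding \<psi> tspan_coord by (simp add: smult_sum_right smult_assoc)
      then have "p^s0 * \<psi> j = (if k \<le> j then \<alpha> j else 0)"
        by (rule ibasis_unique[OF cc]) (use that k in simp)
      then show ?thesis using that p0 by auto
    qed
    have y_t: "y = (\<Sum>j\<in>{k..<?n}. \<psi> j *s cc j)"
      unfolding \<psi> tspan_coord by (rule sum.cong) (auto simp: \<psi>0)
    have "\<exists>j1\<in>{k..<?n}. \<not> p dvd \<psi> j1"
    proof (rule ccontr)
      assume "\<not> ?thesis"
      then have "y \<in> smul_set p" unfolding y_t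
        by (intro smul_set_sum smul_set_smult2) auto
      then show False using ynp by simp
    qed
    then obtain j1 where j1: "k \<le> j1" "j1 < ?n" "\<not> p dvd \<psi> j1" by auto
    define bbs where "bbs = bb \<circ> sw k i1"
    define bb1 where "bb1 = bbs(k := x0)"
    define ccs where "ccs = cc \<circ> sw k j1"
    define cc1 where "cc1 = ccs(k := y)"
    have bbs: "ibasis ?m bbs" unfolding bbs_def by (rule ibasis_permute[OF bb sw_bij]) (use k i1 in auto)
    have ccs: "ibasis ?n ccs" unfolding ccs_def by (rule ibasis_permute[OF cc sw_bij]) (use k j1 in auto)
    have x0c: "x0 = (\<Sum>j<?m. (\<lambda>j. if k \<le> j then \<xi> j else 0) (sw k i1 j) *s bbs j)"
      unfolding \<xi> tspan_coord bbs_def using sum_reindex_bij[OF sw_bij[of k ?m i1]] k i1 by simp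
    have bb1: "ibasis ?m bb1" unfolding bb1_def
      by (rule ibasis_exchange[OF bbs k(1) x0c]) (use i1 dvr_unit[OF dvr] in \<open>auto simp: sw_def\<close>)
    have yc: "y = (\<Sum>j<?n. (\<lambda>j. if k \<le> j then \<psi> j else 0) (sw k j1 j) *s ccs j)"
      unfolding y_t tspan_coord ccs_def using sum_reindex_bij[OF sw_bij[of k ?n j1]] k j1 by simp
    have cc1: "ibasis ?n cc1" unfolding cc1_def
      by (rule ibasis_exchange[OF ccs k(2) yc]) (use j1 dvr_unit[OF dvr] in \<open>auto simp: sw_def\<close>)
    have bb1_lo: "bb1 j = bb j" if "j < k" for j using that i1 by (auto simp: bb1_def bbs_def sw_def)
    have cc1_lo: "cc1 j = cc j" if "j < k" for j using that j1 by (auto simp: cc1_def ccs_def sw_def)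
    have bb1_T: "bb1 i = bb (sw k i1 i)" "k \<le> sw k i1 i" "sw k i1 i < ?m" if "k < i" "i < ?m" for i
      using that i1 by (auto simp: bb1_def bbs_def sw_def)
    have cc1_t: "cc1 j \<in> tspan k ?n cc1" if "j \<in> {k..<?n}" for j by (rule tspan_elem[OF that])
    have cc_in: "cc j \<in> tspan k ?n cc1" if j: "j \<in> {k..<?n}" for j
    proof (cases "j = j1")
      case False
      have "cc j = cc1 (sw k j1 j)" using False j by (auto simp: cc1_def ccs_def sw_def)
      moreover have "sw k j1 j \<in> {k..<?n}" using j j1 by (auto simp: sw_def)
      ultimately show ?thesis using cc1_t by simp
    next
      case True
      obtain w where w: "\<psi> j1 * w = 1" using dvr_unit[OF dvr j1(3)] by (metis dvd_def)
      have rest: "(\<Sum>i\<in>{k..<?n} - {j1}. \<psi> i *s cc i) \<in> tspan k ?n cc1"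
      proof (rule tspan_sum, rule tspan_smult)
        fix i assume i: "i \<in> {k..<?n} - {j1}"
        have "cc i = cc1 (sw k j1 i)" using i by (auto simp: cc1_def ccs_def sw_def)
        moreover have "sw k j1 i \<in> {k..<?n}" using i j1 by (auto simp: sw_def)
        ultimately show "cc i \<in> tspan k ?n cc1" using cc1_t by simp
      qed
      have "y = \<psi> j1 *s cc j1 + (\<Sum>i\<in>{k..<?n} - {j1}. \<psi> i *s cc i)"
        unfolding y_t using j1 by (simp add: sum.remove[of _ j1])
      then have "cc j1 = w *s (y - (\<Sum>i\<in>{k..<?n} - {j1}. \<psi> i *s cc i))"
        using w by (simp add: smult_assoc mult.commute)
      moreover have "y \<in> tspan k ?n cc1" using cc1_t[of k] k by (simp add: cc1_def)
      ultimately show ?thesis using True rest by (simp add: tspan_smult tspan_diff)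
    qed
    have tsub: "tspan k ?n cc \<subseteq> tspan k ?n cc1" by (rule tspan_sub) (rule cc_in)
    define E where "E = (\<lambda>i. SOME e. A *v bb1 i = (\<Sum>j\<in>{k..<?n}. e j *s cc1 j))"
    have E: "A *v bb1 i = (\<Sum>j\<in>{k..<?n}. E i j *s cc1 j)" if "k < i" "i < ?m" for i
    proof -
      have "A *v bb1 i \<in> tspan k ?n cc1"
        using tsub tl bb1_T[OF that] by auto
      then have "\<exists>e. A *v bb1 i = (\<Sum>j\<in>{k..<?n}. e j *s cc1 j)" unfolding tspan_def by blast
      then show ?thesis unfolding E_def by (rule someI_ex)
    qed
    have Edvd: "p^s0 dvd E i k" if "k < i" "i < ?m" for i
    proof -
      have "bb1 i \<in> T" unfolding T_def using bb1_T[OF that] by (auto intro: tspan_elem)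
      then have "A *v bb1 i \<in> smul_set (p^s0)" by (rule mins)
      moreover have "A *v bb1 i = (\<Sum>j<?n. (if k \<le> j then E i j else 0) *s cc1 j)"
        using E[OF that] by (simp only: tspan_coord)
      ultimately have "(\<Sum>j<?n. (if k \<le> j then E i j else 0) *s cc1 j) \<in> smul_set (p^s0)"
        by simp
      from ibasis_dvd[OF cc1 this k(2)] show ?thesis by simp
    qed
    define \<beta> where "\<beta> = (\<lambda>i. if k < i \<and> i < ?m then (SOME b. E i k = p^s0 * b) else 0)"
    have \<beta>: "E i k = p^s0 * \<beta> i" if "k < i" "i < ?m" for i
    proof -
      have "\<exists>b. E i k = p^s0 * b" using Edvd[OF that] by (auto simp: dvd_def)
      then have "E i k = p^s0 * (SOME b. E i k = p^s0 * b)" by (rule someI_ex)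
      with that show ?thesis by (simp add: \<beta>_def)
    qed
    define bb2 where "bb2 = (\<lambda>j. bb1 j - \<beta> j *s bb1 k)"
    have bb2: "ibasis ?m bb2" unfolding bb2_def by (rule ibasis_shear[OF bb1 k(1)]) (simp add: \<beta>_def)
    have bb2_lo: "bb2 j = bb j" if "j < k" for j
      using that bb1_lo by (auto simp: bb2_def \<beta>_def)
    have Abb1k: "A *v bb1 k = p^s0 *s cc1 k" by (simp add: bb1_def cc1_def y)
    define d1 where "d1 = d(k := p^s0)"
    have "Inv A (Suc k) bb2 cc1 d1" unfolding Inv_def
    proof (intro conjI allI impI)
      show "ibasis ?m bb2" by (rule bb2)
      show "ibasis ?n cc1" by (rule cc1)
    next
      fix j assume j: "j < Suc k"
      show "A *v bb2 j = d1 j *s cc1 j"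
      proof (cases "j = k")
        case True then show ?thesis using Abb1k by (simp add: bb2_def \<beta>_def d1_def)
      next
        case False then have "j < k" using j by simp
        then show ?thesis using dj bb2_lo cc1_lo by (simp add: d1_def)
      qed
    next
      fix i assume i: "Suc k \<le> i \<and> i < ?m"
      then have ki: "k < i" "i < ?m" by auto
      have "A *v bb2 i = (\<Sum>j\<in>{k..<?n}. E i j *s cc1 j) - (p^s0 * \<beta> i) *s cc1 k"
        unfolding bb2_def matrix_vector_mult_diff_distrib mv_smult Abb1k E[OF ki] by (simp add: smult_assoc mult.commute[of "\<beta> i"])
      also have "\<dots> = (\<Sum>j\<in>{Suc k..<?n}. E i j *s cc1 j)"
        using \<beta>[OF ki] k(2) by (simp add: sum.atLeast_Suc_lessThan)
      finally show "A *v bb2 i \<in> tspan (Suc k) ?n cc1" by (rule tspanI)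
    qed
    then show ?thesis by blast
  qed
qed



lemma snf_exists:
  fixes A :: "'a::idom^'m::finite^'n::finite" and p :: 'a
  assumes dvr: "dvr_unif p"
  shows "\<exists>bb cc d. snf_pair A bb cc d"
proof -
  let ?m = "CARD('m)" and ?n = "CARD('n)"
  obtain f1 :: "nat \<Rightarrow> 'a^'m" where f1: "ibasis ?m f1" using ibasis_std by blast
  obtain f2 :: "nat \<Rightarrow> 'a^'n" where f2: "ibasis ?n f2" using ibasis_std by blast
  have "k \<le> min ?m ?n \<Longrightarrow> \<exists>bb cc d. Inv A k bb cc d" for k
  proof (induction k)
    case 0
    have "Inv A 0 f1 f2 (\<lambda>_. 0)" unfolding Inv_def using f1 f2 tspan_full[OF f2] by auto
    then show ?case by blast
  next
    case (Suc k)
    then obtain bb cc d where I: "Inv A k bb cc d" by auto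
    then show ?case using snf_step[OF dvr _ _ I] Suc.prems by auto
  qed
  then obtain bb cc d where I: "Inv A (min ?m ?n) bb cc d" by blast
  have "snf_pair A bb cc d" unfolding snf_pair_def
  proof (intro conjI allI impI)
    show "inj_on bb {..<?m}" "inj_on cc {..<?n}" using I ibasis_inj unfolding Inv_def by auto
    show "rbasis (bb ` {..<?m})" "rbasis (cc ` {..<?n})" using I ibasis_rbasis unfolding Inv_def by auto
    show "A *v bb j = d j *s cc j" if "j < min ?m ?n" for j using I that unfolding Inv_def by auto
  next
    fix j assume j: "min ?m ?n \<le> j \<and> j < ?m"
    then have mn: "min ?m ?n = ?n" by auto
    have "A *v bb j \<in> tspan ?n ?n cc" using I j mn unfolding Inv_def by auto
    then show "A *v bb j = 0" unfolding tspan_def by simp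
  qed
  then show ?thesis by blast
qed

definition good_snf where
  "good_snf p l A bb cc d \<longleftrightarrow> snf_pair A bb cc d \<and>
     (\<forall>j < min CARD('m) CARD('n). d j \<noteq> 0 \<longrightarrow> (\<exists>u a. u dvd 1 \<and> d j = u * p^a \<and> a \<le> l))"
  for A :: "'a::idom^'m::finite^'n::finite"

lemma good_snf_exists:
  fixes A :: "'a::idom^'m::finite^'n::finite" and p :: 'a
  assumes dvr: "dvr_unif p" and hl: "\<forall>i>l. elem_div_mult p A i = 0"
  shows "\<exists>bb cc d. good_snf p l A bb cc d"
proof -
  define d where "d = (SOME d. \<exists>bb cc. snf_pair A bb cc d)"
  obtain bb1 cc1 d1 where "snf_pair A bb1 cc1 d1" using snf_exists[OF dvr, of A] by blast
  then have "\<exists>bb cc. snf_pair A bb cc d1" by blast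
  then have "\<exists>bb cc. snf_pair A bb cc d" unfolding d_def by (rule someI[where P="\<lambda>d. \<exists>bb cc. snf_pair A bb cc d"])
  then obtain bb cc where S: "snf_pair A bb cc d" by blast
  have "\<exists>u a. u dvd 1 \<and> d j = u * p^a \<and> a \<le> l" if j: "j < min CARD('m) CARD('n)" "d j \<noteq> 0" for j
  proof -
    obtain u a where ua: "u dvd 1" "d j = u * p^a" using dvr j(2) unfolding dvr_unif_def by blast
    have "a \<le> l"
    proof (rule ccontr)
      assume "\<not> a \<le> l"
      then have "elem_div_mult p A a = 0" using hl by auto
      then have "card {j. j < min CARD('m) CARD('n) \<and> (\<exists>u. u dvd 1 \<and> d j = u * p ^ a)} = 0"
        unfolding elem_div_mult_def d_def Let_def by simp
      moreover have "finite {j. j < min CARD('m) CARD('n) \<and> (\<exists>u. u dvd 1 \<and> d j = u * p ^ a)}" by simp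
      moreover have "j \<in> {j. j < min CARD('m) CARD('n) \<and> (\<exists>u. u dvd 1 \<and> d j = u * p ^ a)}" using j ua by auto
      ultimately show False by auto
    qed
    then show ?thesis using ua by blast
  qed
  then show ?thesis using S unfolding good_snf_def by blast
qed

lemma sum_restrict_less:
  "k \<le> (N::nat) \<Longrightarrow> (\<Sum>j<N. if j < k then f j else 0) = (\<Sum>j<k. f j)"
  by (rule sum.mono_neutral_cong_right) auto

lemma Aform:
  fixes A :: "'a::idom^'m::finite^'n::finite"
  assumes S: "snf_pair A bb cc d"
  shows "A *v (\<Sum>j<CARD('m). \<xi> j *s bb j) = (\<Sum>j<CARD('n). (\<xi> j * (if j < min CARD('m) CARD('n) then d j else 0)) *s cc j)"
proof -
  let ?m = "CARD('m)" and ?n = "CARD('n)" and ?k = "min CARD('m) CARD('n)"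
  have "A *v (\<Sum>j<?m. \<xi> j *s bb j) = (\<Sum>j<?m. \<xi> j *s (A *v bb j))" by (simp add: mv_sum mv_smult)
  also have "\<dots> = (\<Sum>j<?m. if j < ?k then (\<xi> j * d j) *s cc j else 0)"
    using S unfolding snf_pair_def by (intro sum.cong) (auto simp: smult_assoc)
  also have "\<dots> = (\<Sum>j<?k. (\<xi> j * d j) *s cc j)"
    by (rule sum_restrict_less) simp
  also have "\<dots> = (\<Sum>j<?n. if j < ?k then (\<xi> j * d j) *s cc j else 0)"
    by (rule sum_restrict_less[symmetric]) simp
  also have "\<dots> = (\<Sum>j<?n. (\<xi> j * (if j < ?k then d j else 0)) *s cc j)"
    by (intro sum.cong) auto
  finally show ?thesis .
qed



lemma rbasis_indep: "rbasis S \<Longrightarrow> finite T \<Longrightarrow> T \<subseteq> S \<Longrightarrow> (\<Sum>t\<in>T. c t *s t) = 0 \<Longrightarrow> t \<in> T \<Longrightarrow> c t = 0"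
  unfolding rbasis_def by blast

lemma rbasis_span: "rbasis S \<Longrightarrow> \<exists>T c. finite T \<and> T \<subseteq> S \<and> x = (\<Sum>t\<in>T. c t *s t)"
  unfolding rbasis_def by blast

lemma snf_A1: "snf_pair A bb cc d \<Longrightarrow> j < min CARD('m) CARD('n) \<Longrightarrow> A *v bb j = d j *s cc j"
  for A :: "'a::idom^'m::finite^'n::finite"
  unfolding snf_pair_def by blast

lemma snf_A2: "snf_pair A bb cc d \<Longrightarrow> min CARD('m) CARD('n) \<le> j \<Longrightarrow> j < CARD('m) \<Longrightarrow> A *v bb j = 0"
  for A :: "'a::idom^'m::finite^'n::finite"
  unfolding snf_pair_def by blast

lemma snf_ibasis:
  fixes A :: "'a::idom^'m::finite^'n::finite"
  assumes S: "snf_pair A bb cc d"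
  shows "ibasis CARD('m) bb" "ibasis CARD('n) cc"
  using S rbasis_ibasis unfolding snf_pair_def by auto

lemma good_D:
  fixes A :: "'a::idom^'m::finite^'n::finite"
  assumes G: "good_snf p l A bb cc d" and j: "(if j < min CARD('m) CARD('n) then d j else 0) \<noteq> 0"
  shows "\<exists>u a. u dvd 1 \<and> (if j < min CARD('m) CARD('n) then d j else 0) = u * p^a \<and> a \<le> l"
  using G j unfolding good_snf_def by (auto split: if_splits)

lemma good_Pl:
  fixes A :: "'a::idom^'m::finite^'n::finite"
  assumes dvr: "dvr_unif p" and G: "good_snf p l A bb cc d" and x: "A *v x \<in> smul_set (p^Suc l)"
  shows "\<exists>z\<in>kerset A. x - z \<in> smul_set p"
proof -
  let ?m = "CARD('m)" and ?n = "CARD('n)" and ?k = "min CARD('m) CARD('n)"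
  define D where "D = (\<lambda>j. if j < ?k then d j else 0)"
  have S: "snf_pair A bb cc d" using G unfolding good_snf_def by auto
  note bb = snf_ibasis(1)[OF S] and cc = snf_ibasis(2)[OF S]
  have AF: "A *v (\<Sum>j<?m. \<xi> j *s bb j) = (\<Sum>j<?n. (\<xi> j * D j) *s cc j)" for \<xi>
    unfolding D_def by (rule Aform[OF S])
  obtain \<xi> where \<xi>: "x = (\<Sum>j<?m. \<xi> j *s bb j)" using ibasis_span[OF bb] by blast
  have Ax: "A *v x = (\<Sum>j<?n. (\<xi> j * D j) *s cc j)" unfolding \<xi> AF ..
  have pd: "p dvd \<xi> j" if jj: "j < ?m" "D j \<noteq> 0" for j
  proof -
    have jn: "j < ?n" using jj by (auto simp: D_def split: if_splits)
    have dv: "p^Suc l dvd \<xi> j * D j" using ibasis_dvd[OF cc _ jn, of "\<lambda>j. \<xi> j * D j"] x unfolding Ax by blast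
    obtain u a where ua: "u dvd 1" "D j = u * p^a" "a \<le> l" using good_D[OF G] jj(2) unfolding D_def by blast
    have "p^a * p^(Suc l - a) dvd p^a * (\<xi> j * u)"
      using dv ua by (simp add: power_add[symmetric] ac_simps)
    then have "p^(Suc l - a) dvd \<xi> j * u" using dvr_p0[OF dvr] by simp
    moreover have "p dvd p^(Suc l - a)" using ua(3) by (simp add: dvd_power)
    ultimately have "p dvd \<xi> j * u" using dvd_trans by blast
    moreover obtain w where w: "u * w = 1" using ua(1) by (metis dvd_def)
    ultimately have "p dvd \<xi> j * u * w" by simp
    moreover have "\<xi> j * u * w = \<xi> j" using w by (simp add: mult.assoc)
    ultimately show ?thesis by simp
  qed
  define z where "z = (\<Sum>j<?m. (if D j \<noteq> 0 then 0 else \<xi> j) *s bb j)"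
  have "A *v z = (\<Sum>j<?n. ((if D j \<noteq> 0 then 0 else \<xi> j) * D j) *s cc j)"
    unfolding z_def AF ..
  also have "\<dots> = 0" by (rule sum.neutral) auto
  finally have zk: "z \<in> kerset A" by (simp add: kerset_def)
  have "x - z = (\<Sum>j<?m. (if D j \<noteq> 0 then \<xi> j else 0) *s bb j)"
    unfolding \<xi> z_def sum_subtractf[symmetric] by (rule sum.cong) (auto simp: smult_diff_left[symmetric])
  also have "\<dots> \<in> smul_set p" by (intro smul_set_sum smul_set_smult2) (auto intro: pd)
  finally show ?thesis using zk by blast
qed

lemma good_PN:
  fixes A :: "'a::idom^'m::finite^'n::finite"
  assumes dvr: "dvr_unif p" and G: "good_snf p l A bb cc d" and z: "z \<in> Nset p A k"
  shows "z \<in> Nset p A l"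
proof -
  let ?m = "CARD('m)" and ?n = "CARD('n)" and ?k = "min CARD('m) CARD('n)"
  define D where "D = (\<lambda>j. if j < ?k then d j else 0)"
  have S: "snf_pair A bb cc d" using G unfolding good_snf_def by auto
  note bb = snf_ibasis(1)[OF S] and cc = snf_ibasis(2)[OF S]
  have AF: "A *v (\<Sum>j<?m. \<xi> j *s bb j) = (\<Sum>j<?n. (\<xi> j * D j) *s cc j)" for \<xi>
    unfolding D_def by (rule Aform[OF S])
  obtain x where x: "A *v x = p^k *s z" using z unfolding Nset_def by blast
  obtain \<xi> where \<xi>: "x = (\<Sum>j<?m. \<xi> j *s bb j)" using ibasis_span[OF bb] by blast
  obtain \<zeta> where \<zeta>: "z = (\<Sum>j<?n. \<zeta> j *s cc j)" using ibasis_span[OF cc] by blast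
  have eq: "\<xi> j * D j = p^k * \<zeta> j" if "j < ?n" for j
  proof (rule ibasis_unique[OF cc _ that])
    show "(\<Sum>j<?n. (\<xi> j * D j) *s cc j) = (\<Sum>j<?n. (p^k * \<zeta> j) *s cc j)"
      using x unfolding \<xi> \<zeta> AF by (simp add: smult_sum_right smult_assoc)
  qed
  have dv: "D j dvd p^l * \<zeta> j" if "j < ?n" for j
  proof (cases "D j = 0")
    case True
    then have "\<zeta> j = 0" using eq[OF that] dvr_p0[OF dvr] by simp
    then show ?thesis by simp
  next
    case False
    obtain u a where ua: "u dvd 1" "D j = u * p^a" "a \<le> l" using good_D[OF G] False unfolding D_def by blast
    obtain w where w: "u * w = 1" using ua(1) by (metis dvd_def)
    have "p^l * \<zeta> j = (w * p^(l - a) * \<zeta> j) * (u * p^a)"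
      using w ua(3) by (simp add: ac_simps power_add[symmetric])
    then show ?thesis using ua(2) by (metis dvd_triv_right)
  qed
  define \<xi>' where "\<xi>' = (\<lambda>j. SOME t. p^l * \<zeta> j = D j * t)"
  have \<xi>': "\<xi>' j * D j = p^l * \<zeta> j" if "j < ?n" for j
  proof -
    have "\<exists>t. p^l * \<zeta> j = D j * t" using dv[OF that] by (auto simp: dvd_def)
    then have "p^l * \<zeta> j = D j * \<xi>' j" unfolding \<xi>'_def by (rule someI_ex)
    then show ?thesis by (simp add: mult.commute)
  qed
  define x' where "x' = (\<Sum>j<?m. \<xi>' j *s bb j)"
  have "A *v x' = (\<Sum>j<?n. (\<xi>' j * D j) *s cc j)" unfolding x'_def AF ..
  also have "\<dots> = (\<Sum>j<?n. (p^l * \<zeta> j) *s cc j)" by (rule sum.cong) (auto simp: \<xi>')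
  also have "\<dots> = p^l *s z" unfolding \<zeta> by (simp add: smult_sum_right smult_assoc)
  finally have "A *v x' = p^l *s z" .
  moreover then have "x' \<in> Mset p A l" unfolding Mset_def by (simp add: smul_set_self)
  ultimately show ?thesis unfolding Nset_def by blast
qed

definition kerbasis where
  "kerbasis A K \<longleftrightarrow> finite K \<and> K \<subseteq> kerset A \<and>
     (\<forall>T c. T \<subseteq> K \<and> (\<Sum>t\<in>T. c t *s t) = 0 \<longrightarrow> (\<forall>t\<in>T. c t = 0)) \<and>
     (\<forall>x\<in>kerset A. \<exists>c. x = (\<Sum>t\<in>K. c t *s t))"

lemma good_ker:
  fixes A :: "'a::idom^'m::finite^'n::finite"
  assumes G: "good_snf p l A bb cc d"
  shows "\<exists>K. kerbasis A K"
proof -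
  let ?m = "CARD('m)" and ?n = "CARD('n)" and ?k = "min CARD('m) CARD('n)"
  define D where "D = (\<lambda>j. if j < ?k then d j else 0)"
  have S: "snf_pair A bb cc d" using G unfolding good_snf_def by auto
  note bb = snf_ibasis(1)[OF S] and cc = snf_ibasis(2)[OF S]
  have AF: "A *v (\<Sum>j<?m. \<xi> j *s bb j) = (\<Sum>j<?n. (\<xi> j * D j) *s cc j)" for \<xi>
    unfolding D_def by (rule Aform[OF S])
  have inj: "inj_on bb {..<?m}" using S unfolding snf_pair_def by auto
  have R: "rbasis (bb ` {..<?m})" using S unfolding snf_pair_def by auto
  define K where "K = bb ` {j\<in>{..<?m}. D j = 0}"
  have fin: "finite K" unfolding K_def by simp
  have sub: "K \<subseteq> kerset A"
  proof
    fix t assume "t \<in> K"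
    then obtain j where j: "j < ?m" "D j = 0" "t = bb j" unfolding K_def by auto
    have "A *v bb j = 0"
    proof (cases "j < ?k")
      case True then show ?thesis using snf_A1[OF S True] j(2) by (simp add: D_def)
    next
      case False then have "?k \<le> j" by linarith
      then show ?thesis using snf_A2[OF S _ j(1)] by blast
    qed
    then show "t \<in> kerset A" using j by (simp add: kerset_def)
  qed
  have ind: "\<forall>T c. T \<subseteq> K \<and> (\<Sum>t\<in>T. c t *s t) = 0 \<longrightarrow> (\<forall>t\<in>T. c t = 0)"
  proof (intro allI impI)
    fix T c assume "T \<subseteq> K \<and> (\<Sum>t\<in>T. c t *s t) = 0"
    moreover then have "finite T" using fin finite_subset by blast
    moreover have "K \<subseteq> bb ` {..<?m}" unfolding K_def by auto
    ultimately show "\<forall>t\<in>T. c t = 0" using rbasis_indep[OF R, of T c] by blast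
  qed
  have sp: "\<exists>c. x = (\<Sum>t\<in>K. c t *s t)" if x: "x \<in> kerset A" for x
  proof -
    obtain \<xi> where \<xi>: "x = (\<Sum>j<?m. \<xi> j *s bb j)" using ibasis_span[OF bb] by blast
    have z: "\<xi> j = 0" if "j < ?m" "D j \<noteq> 0" for j
    proof -
      have jn: "j < ?n" using that by (auto simp: D_def split: if_splits)
      have "A *v x = 0" using x by (simp add: kerset_def)
      then have "(\<Sum>j<?n. (\<xi> j * D j) *s cc j) = 0"
        unfolding \<xi> AF .
      then have "\<xi> j * D j = 0" using ibasis_indep[OF cc _ jn, of "\<lambda>j. \<xi> j * D j"] by blast
      then show ?thesis using that(2) by simp
    qed
    define c where "c = (\<lambda>t. \<xi> (inv_into {..<?m} bb t))"
    have "(\<Sum>t\<in>K. c t *s t) = (\<Sum>j<?m. (if bb j \<in> K then c (bb j) else 0) *s bb j)"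
      by (rule set_to_idx[OF inj]) (auto simp: K_def)
    also have "\<dots> = x" unfolding \<xi>
    proof (rule sum.cong)
      fix j assume j: "j \<in> {..<?m}"
      have "bb j \<in> K \<longleftrightarrow> D j = 0"
      proof
        assume "bb j \<in> K"
        then obtain i where i: "i < ?m" "D i = 0" "bb j = bb i" unfolding K_def by auto
        have "i = j" by (rule inj_onD[OF inj i(3)[symmetric]]) (use i j in auto)
        then show "D j = 0" using i by simp
      next
        assume "D j = 0" then show "bb j \<in> K" using j unfolding K_def by blast
      qed
      moreover have "c (bb j) = \<xi> j" using j inj by (simp add: c_def)
      ultimately show "(if bb j \<in> K then c (bb j) else 0) *s bb j = \<xi> j *s bb j"
        using j z[of j] by (cases "D j = 0") simp_all
    qed simp
    finally show ?thesis by (rule exI[of _ c, OF sym])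
  qed
  have "kerbasis A K" unfolding kerbasis_def
  proof (intro conjI)
    show "\<forall>x\<in>kerset A. \<exists>c. x = (\<Sum>t\<in>K. c t *s t)" using sp by blast
  qed (use fin sub ind in auto)
  then show ?thesis by blast
qed



lemma sum_extend:
  assumes "finite U" "T \<subseteq> U"
  shows "(\<Sum>t\<in>U. (if t \<in> T then c t else 0) *s (t::'a::ring^'k)) = (\<Sum>t\<in>T. c t *s t)"
  by (rule sum.mono_neutral_cong_right) (use assms in auto)

lemma rbasis_pind:
  assumes R: "rbasis (S::('a::idom^'k) set)" shows "pind p S"
  unfolding pind_def
proof safe
  fix T c t assume T: "finite T" "T \<subseteq> S" and s: "(\<Sum>t\<in>T. c t *s t) \<in> smul_set p" and t: "t \<in> T"
  obtain w where w: "(\<Sum>t\<in>T. c t *s t) = p *s w" using s unfolding smul_set_def by blast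
  obtain T' c' where T': "finite T'" "T' \<subseteq> S" "w = (\<Sum>t\<in>T'. c' t *s t)" using rbasis_span[OF R] by blast
  define U where "U = T \<union> T'"
  have U: "finite U" "U \<subseteq> S" using T T' by (auto simp: U_def)
  have "(\<Sum>t\<in>U. ((if t \<in> T then c t else 0) - p * (if t \<in> T' then c' t else 0)) *s t)
      = (\<Sum>t\<in>U. (if t \<in> T then c t else 0) *s t) - p *s (\<Sum>t\<in>U. (if t \<in> T' then c' t else 0) *s t)"
    by (simp add: smult_diff_left sum_subtractf smult_sum_right smult_assoc)
  also have "\<dots> = 0" using w T' T by (simp add: sum_extend U_def)
  finally have "((if t \<in> T then c t else 0) - p * (if t \<in> T' then c' t else 0)) = 0"
    by (rule rbasis_indep[OF R U(1) U(2)]) (use t in \<open>simp add: U_def\<close>)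
  then have "c t = p * (if t \<in> T' then c' t else 0)" using t by simp
  then show "p dvd c t" by simp
qed

lemma modp_full:
  assumes dvr: "dvr_unif p" and P: "pind p (S::('a::idom^'k::finite) set)"
    and Sp: "\<And>x. \<exists>T c. finite T \<and> T \<subseteq> S \<and> x - (\<Sum>t\<in>T. c t *s t) \<in> smul_set p"
  shows "\<exists>g. ibasis CARD('k) g \<and> S = g ` {..<CARD('k)}"
proof -
  obtain f :: "nat \<Rightarrow> 'a^'k" where f: "ibasis CARD('k) f" using ibasis_std by blast
  have fin: "finite S" using pind_card[OF dvr f P] by blast
  obtain g where g: "ibasis CARD('k) g" "S \<subseteq> g ` {..<CARD('k)}" using exch_ext[OF dvr f fin P] by blast
  have "g j \<in> S" if j: "j < CARD('k)" for j
  proof (rule ccontr)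
    assume nS: "g j \<notin> S"
    obtain T c where T: "finite T" "T \<subseteq> S" "g j - (\<Sum>t\<in>T. c t *s t) \<in> smul_set p" using Sp by blast
    have gT: "g j \<notin> T" using nS T by auto
    define c' where "c' = (\<lambda>t. if t = g j then 1 else - c t)"
    have "(\<Sum>t\<in>insert (g j) T. c' t *s t) = g j - (\<Sum>t\<in>T. c t *s t)"
    proof -
      have "(\<Sum>t\<in>insert (g j) T. c' t *s t) = g j + (\<Sum>t\<in>T. c' t *s t)"
        using T(1) gT by (simp add: c'_def)
      also have "(\<Sum>t\<in>T. c' t *s t) = (\<Sum>t\<in>T. - (c t *s t))"
        by (rule sum.cong) (use gT in \<open>auto simp: c'_def vector_smult_lneg\<close>)
      also have "\<dots> = - (\<Sum>t\<in>T. c t *s t)" by (simp add: sum_negf)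
      finally show ?thesis by simp
    qed
    then have "p dvd c' (g j)"
      using ibasis_pind[OF g(1)] T j g(2)
      by (intro pindD[of p "g ` {..<CARD('k)}" "insert (g j) T" c' "g j"]) auto
    then show False using dvr_pnu[OF dvr] by (simp add: c'_def)
  qed
  then have "S = g ` {..<CARD('k)}" using g(2) by auto
  then show ?thesis using g(1) by blast
qed

lemma rbasis_card:
  assumes dvr: "dvr_unif (p::'a::idom)" and R: "rbasis (S::('a^'k::finite) set)"
  shows "finite S \<and> card S = CARD('k)"
proof -
  have "\<exists>T c. finite T \<and> T \<subseteq> S \<and> x - (\<Sum>t\<in>T. c t *s t) \<in> smul_set p" for x :: "'a^'k"
  proof -
    obtain T c where "finite T" "T \<subseteq> S" "x = (\<Sum>t\<in>T. c t *s t)" using rbasis_span[OF R, of x] by blast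
    then have "finite T \<and> T \<subseteq> S \<and> x - (\<Sum>t\<in>T. c t *s t) \<in> smul_set p" by simp
    then show ?thesis by blast
  qed
  then obtain g where g: "ibasis CARD('k) g" "S = g ` {..<CARD('k)}"
    using modp_full[OF dvr rbasis_pind[OF R]] by blast
  then show ?thesis using ibasis_inj[OF g(1)] by (simp add: card_image)
qed

lemma bij_piece:
  assumes e1: "bij_betw e1 {..<r::nat} X" and e2: "bij_betw e2 {..<N-r} Y" and XY: "X \<inter> Y = {}" and r: "r \<le> N"
  shows "bij_betw (\<lambda>j. if j < r then e1 j else e2 (j - r)) {..<N} (X \<union> Y)"
  unfolding bij_betw_def
proof
  have i1: "inj_on e1 {..<r}" and im1: "e1 ` {..<r} = X" using e1 by (auto simp: bij_betw_def)
  have i2: "inj_on e2 {..<N-r}" and im2: "e2 ` {..<N-r} = Y" using e2 by (auto simp: bij_betw_def)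
  show "inj_on (\<lambda>j. if j < r then e1 j else e2 (j - r)) {..<N}"
  proof (rule inj_onI)
    fix a b assume a: "a \<in> {..<N}" and b: "b \<in> {..<N}"
      and eq: "(if a < r then e1 a else e2 (a - r)) = (if b < r then e1 b else e2 (b - r))"
    show "a = b"
    proof (cases "a < r"; cases "b < r")
      assume "a < r" "b < r" then show ?thesis using eq i1 by (auto dest: inj_onD)
    next
      assume "a < r" "\<not> b < r"
      then have "b - r < N - r" using b by auto
      then have "e1 a \<in> X" "e2 (b - r) \<in> Y" using im1 im2 \<open>a < r\<close> by auto
      then show ?thesis using eq XY \<open>a < r\<close> \<open>\<not> b < r\<close> by auto
    next
      assume "\<not> a < r" "b < r"
      then have "a - r < N - r" using a by auto
      then have "e2 (a - r) \<in> Y" "e1 b \<in> X" using im1 im2 \<open>b < r\<close> by auto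
      then show ?thesis using eq XY \<open>\<not> a < r\<close> \<open>b < r\<close> by auto
    next
      assume "\<not> a < r" "\<not> b < r"
      then have "a - r = b - r" using eq i2 a b by (auto dest: inj_onD)
      then show ?thesis using \<open>\<not> a < r\<close> \<open>\<not> b < r\<close> by simp
    qed
  qed
  show "(\<lambda>j. if j < r then e1 j else e2 (j - r)) ` {..<N} = X \<union> Y"
  proof
    show "(\<lambda>j. if j < r then e1 j else e2 (j - r)) ` {..<N} \<subseteq> X \<union> Y"
    proof
      fix x assume "x \<in> (\<lambda>j. if j < r then e1 j else e2 (j - r)) ` {..<N}"
      then obtain j where j: "j < N" "x = (if j < r then e1 j else e2 (j - r))" by auto
      show "x \<in> X \<union> Y"
      proof (cases "j < r")
        case True then show ?thesis using j im1 by auto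
      next
        case False then have "j - r < N - r" using j by auto
        then show ?thesis using j im2 False by auto
      qed
    qed
    show "X \<union> Y \<subseteq> (\<lambda>j. if j < r then e1 j else e2 (j - r)) ` {..<N}"
    proof
      fix x assume "x \<in> X \<union> Y"
      then show "x \<in> (\<lambda>j. if j < r then e1 j else e2 (j - r)) ` {..<N}"
      proof
        assume "x \<in> X"
        then obtain a where "a < r" "x = e1 a" using im1 by auto
        then show ?thesis using r by (auto intro!: image_eqI[of _ _ a])
      next
        assume "x \<in> Y"
        then obtain a where "a < N - r" "x = e2 a" using im2 by auto
        then show ?thesis by (auto intro!: image_eqI[of _ _ "a + r"])
      qed
    qed
  qed
qed

lemma bij_enum: "finite X \<Longrightarrow> \<exists>e. bij_betw e {..<card X} X"
  using ex_bij_betw_nat_finite[of X] by (auto simp: atLeast0LessThan)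



lemma modp_span: "modp_basis p L B \<Longrightarrow> x \<in> L \<Longrightarrow> \<exists>T c. finite T \<and> T \<subseteq> B \<and> x - (\<Sum>t\<in>T. c t *s t) \<in> smul_set p"
  unfolding modp_basis_def by blast

lemma smul_set_mult: "x \<in> smul_set c \<Longrightarrow> (a *s x::'a::idom^'k) \<in> smul_set (a * c)"
  by (auto simp: smul_set_iff)

lemma pind_contra:
  assumes dvr: "dvr_unif p" and P: "pind p S" and b: "b \<in> S" and T: "finite T" "T \<subseteq> S" "b \<notin> T"
    and s: "b - (\<Sum>t\<in>T. c t *s t) \<in> smul_set p"
  shows False
proof -
  define c' where "c' = (\<lambda>t. if t = b then 1 else - c t)"
  have "(\<Sum>t\<in>insert b T. c' t *s t) = b + (\<Sum>t\<in>T. c' t *s t)"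
    using T by (simp add: c'_def)
  also have "(\<Sum>t\<in>T. c' t *s t) = (\<Sum>t\<in>T. - (c t *s t))"
    by (rule sum.cong) (use T in \<open>auto simp: c'_def vector_smult_lneg\<close>)
  also have "\<dots> = - (\<Sum>t\<in>T. c t *s t)" by (simp add: sum_negf)
  finally have "(\<Sum>t\<in>insert b T. c' t *s t) = b - (\<Sum>t\<in>T. c t *s t)" by simp
  then have "p dvd c' b"
    using s T b by (intro pindD[OF P, of "insert b T" c' b]) auto
  then show False using dvr_pnu[OF dvr] by (simp add: c'_def)
qed

lemma left_part:
  fixes A :: "'a::idom^'m::finite^'n::finite" and p :: 'a and Bs :: "nat \<Rightarrow> ('a^'m) set"
  assumes dvr: "dvr_unif p"
    and Pl: "\<And>x. A *v x \<in> smul_set (p^Suc l) \<Longrightarrow> \<exists>z\<in>kerset A. x - z \<in> smul_set p"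
    and h1: "Bs (Suc l) \<subseteq> kerset A" and h2: "\<forall>i\<le>l. Bs i \<subseteq> Mset p A i"
    and h3: "modp_basis p (kerset A) (Bs (Suc l))"
    and h4: "\<forall>i\<le>l. modp_basis p (Mset p A i) (\<Union>j\<in>{i..Suc l}. Bs j)"
  shows "left_snf_basis A (\<Union>j\<le>Suc l. Bs j)"
proof -
  let ?m = "CARD('m)" and ?n = "CARD('n)"
  define B where "B = (\<Union>j\<le>Suc l. Bs j)"
  have BB: "(\<Union>j\<in>{0..Suc l}. Bs j) = B" by (auto simp: B_def)
  have mb0: "modp_basis p (Mset p A 0) B" using h4 BB by force
  have M0: "Mset p A 0 = UNIV" by (simp add: Mset_def)
  have pB: "pind p B" by (rule modp_basis_pind[OF mb0])
  have spB: "\<exists>T c. finite T \<and> T \<subseteq> B \<and> x - (\<Sum>t\<in>T. c t *s t) \<in> smul_set p" for x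
    using modp_span[OF mb0, of x] M0 by simp
  obtain g where g: "ibasis ?m g" "B = g ` {..<?m}" using modp_full[OF dvr pB spB] by blast
  have finB: "finite B" and cardB: "card B = ?m" using g ibasis_inj[OF g(1)] by (auto simp: card_image)
  have rB: "rbasis B" using ibasis_rbasis[OF g(1)] g(2) by simp
  have BsB: "Bs j \<subseteq> B" if "j \<le> Suc l" for j using that by (auto simp: B_def)
  define B1 where "B1 = B - kerset A"
  define B2 where "B2 = B \<inter> kerset A"
  have nk: "A *v b \<notin> smul_set (p^Suc l)" if b: "b \<in> B1" for b
  proof
    assume "A *v b \<in> smul_set (p^Suc l)"
    then obtain z where z: "z \<in> kerset A" "b - z \<in> smul_set p" using Pl by blast
    obtain T c where T: "finite T" "T \<subseteq> Bs (Suc l)" "z - (\<Sum>t\<in>T. c t *s t) \<in> smul_set p"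
      using modp_span[OF h3 z(1)] by blast
    have "b - (\<Sum>t\<in>T. c t *s t) = (b - z) + (z - (\<Sum>t\<in>T. c t *s t))" by simp
    also have "\<dots> \<in> smul_set p" using z(2) T(3) by (rule smul_set_add)
    finally have s: "b - (\<Sum>t\<in>T. c t *s t) \<in> smul_set p" .
    have "b \<notin> T" using b T(2) h1 by (auto simp: B1_def)
    then show False using pind_contra[OF dvr pB _ T(1) _ _ s] b T(2) BsB[of "Suc l"]
      by (auto simp: B1_def)
  qed
  define kv where "kv = (\<lambda>b. GREATEST i. i \<le> l \<and> A *v b \<in> smul_set (p^i))"
  have kvP: "kv b \<le> l \<and> A *v b \<in> smul_set (p^kv b)" for b
    unfolding kv_def by (rule GreatestI_nat[of _ 0 l]) auto
  have kvG: "i \<le> kv b" if "i \<le> l" "A *v b \<in> smul_set (p^i)" for b i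
    unfolding kv_def by (rule Greatest_le_nat[of _ i l]) (use that in auto)
  have kvN: "A *v b \<notin> smul_set (p^Suc (kv b))" if b: "b \<in> B1" for b
  proof (cases "kv b < l")
    case True
    show ?thesis
    proof
      assume "A *v b \<in> smul_set (p^Suc (kv b))"
      then have "Suc (kv b) \<le> kv b" using kvG[of "Suc (kv b)" b] True by simp
      then show False by simp
    qed
  next
    case False then have "kv b = l" using kvP[of b] by simp
    then show ?thesis using nk[OF b] by simp
  qed
  define cv where "cv = (\<lambda>b. SOME c. A *v b = p^kv b *s c)"
  have cvA: "A *v b = p^kv b *s cv b" for b
  proof -
    have "\<exists>c. A *v b = p^kv b *s c" using kvP[of b] unfolding smul_set_def by blast
    then show ?thesis unfolding cv_def by (rule someI_ex)
  qed
  have finB1: "finite B1" using finB by (simp add: B1_def)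
  have indep: "\<forall>b\<in>T. p dvd t b"
    if T: "finite T" "T \<subseteq> B1" and s: "(\<Sum>b\<in>T. t b *s cv b) \<in> smul_set p" for T t
  proof (rule ccontr)
    assume "\<not> (\<forall>b\<in>T. p dvd t b)"
    define U where "U = {b\<in>T. \<not> p dvd t b}"
    have U: "finite U" "U \<noteq> {}" using T(1) \<open>\<not> (\<forall>b\<in>T. p dvd t b)\<close> by (auto simp: U_def)
    define k0 where "k0 = Max (kv ` U)"
    have "k0 \<in> kv ` U" unfolding k0_def by (rule Max_in) (use U in auto)
    then obtain b0 where b0: "b0 \<in> U" "kv b0 = k0" by auto
    have kU: "kv b \<le> k0" if "b \<in> U" for b using U that unfolding k0_def by (auto intro: Max_ge)
    have k0l: "k0 \<le> l" using kvP[of b0] b0 by simp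
    define T0 where "T0 = {b\<in>T. kv b \<le> k0}"
    have T0: "finite T0" "T0 \<subseteq> T" using T by (auto simp: T0_def)
    define x where "x = (\<Sum>b\<in>T0. (t b * p^(k0 - kv b)) *s b)"
    have Ax: "A *v x = (\<Sum>b\<in>T0. (t b * p^k0) *s cv b)"
      unfolding x_def mv_sum mv_smult
    proof (rule sum.cong)
      fix b assume "b \<in> T0"
      then have "kv b \<le> k0" by (simp add: T0_def)
      then have "p^(k0 - kv b) * p^kv b = p^k0" by (simp add: power_add[symmetric])
      then show "(t b * p^(k0 - kv b)) *s (A *v b) = (t b * p^k0) *s cv b"
        unfolding cvA smult_assoc by (simp add: mult.assoc)
    qed simp
    have s1: "(\<Sum>b\<in>T. (t b * p^k0) *s cv b) \<in> smul_set (p^Suc k0)"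
    proof -
      have "(\<Sum>b\<in>T. (t b * p^k0) *s cv b) = p^k0 *s (\<Sum>b\<in>T. t b *s cv b)"
        by (simp add: smult_sum_right smult_assoc mult.commute)
      also have "\<dots> \<in> smul_set (p^k0 * p)" by (rule smul_set_mult[OF s])
      finally show ?thesis by (simp add: mult.commute)
    qed
    have s2: "(\<Sum>b\<in>T - T0. (t b * p^k0) *s cv b) \<in> smul_set (p^Suc k0)"
    proof (rule smul_set_sum, rule smul_set_smult2)
      fix b assume b: "b \<in> T - T0"
      then have "b \<notin> U" using kU by (auto simp: T0_def)
      then have "p dvd t b" using b by (auto simp: U_def)
      from mult_dvd_mono[OF this dvd_refl[of "p^k0"]] show "p^Suc k0 dvd t b * p^k0"
        by (simp only: power_Suc)
    qed
    have "A *v x = (\<Sum>b\<in>T. (t b * p^k0) *s cv b) - (\<Sum>b\<in>T - T0. (t b * p^k0) *s cv b)"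
      unfolding Ax sum.subset_diff[OF T0(2) T(1), of "\<lambda>b. (t b * p^k0) *s cv b"] by simp
    also have "\<dots> \<in> smul_set (p^Suc k0)" using s1 s2 by (rule smul_set_diff)
    finally have Axk: "A *v x \<in> smul_set (p^Suc k0)" .
    have "\<exists>T' c'. finite T' \<and> T' \<subseteq> B \<and> (\<forall>u\<in>T'. u \<in> kerset A \<or> k0 < kv u) \<and>
            x - (\<Sum>u\<in>T'. c' u *s u) \<in> smul_set p"
    proof (cases "k0 < l")
      case True
      have xM: "x \<in> Mset p A (Suc k0)" using Axk by (simp add: Mset_def)
      have mbk: "modp_basis p (Mset p A (Suc k0)) (\<Union>j\<in>{Suc k0..Suc l}. Bs j)" using h4 True by simp
      obtain T' c' where T': "finite T'" "T' \<subseteq> (\<Union>j\<in>{Suc k0..Suc l}. Bs j)"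
        "x - (\<Sum>u\<in>T'. c' u *s u) \<in> smul_set p" using modp_span[OF mbk xM] by blast
      have "T' \<subseteq> B"
      proof
        fix u assume "u \<in> T'"
        then obtain j where "j \<in> {Suc k0..Suc l}" "u \<in> Bs j" using T'(2) by blast
        then show "u \<in> B" unfolding B_def by auto
      qed
      moreover have "u \<in> kerset A \<or> k0 < kv u" if u: "u \<in> T'" for u
      proof -
        obtain j where "j \<in> {Suc k0..Suc l}" "u \<in> Bs j" using T'(2) u by blast
        then have j: "Suc k0 \<le> j" "j \<le> Suc l" "u \<in> Bs j" by auto
        show ?thesis
        proof (cases "j = Suc l")
          case True then show ?thesis using h1 j by auto
        next
          case False
          then have "j \<le> l" using j by simp
          then have "A *v u \<in> smul_set (p^j)" using h2 j(3) by (auto simp: Mset_def)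
          then have "j \<le> kv u" using kvG \<open>j \<le> l\<close> by blast
          then show ?thesis using j by simp
        qed
      qed
      ultimately show ?thesis using T' by blast
    next
      case False
      then have "k0 = l" using k0l by simp
      then obtain z where z: "z \<in> kerset A" "x - z \<in> smul_set p" using Pl Axk by blast
      obtain T' c' where T': "finite T'" "T' \<subseteq> Bs (Suc l)" "z - (\<Sum>t\<in>T'. c' t *s t) \<in> smul_set p"
        using modp_span[OF h3 z(1)] by blast
      have "x - (\<Sum>t\<in>T'. c' t *s t) = (x - z) + (z - (\<Sum>t\<in>T'. c' t *s t))" by simp
      also have "\<dots> \<in> smul_set p" using z(2) T'(3) by (rule smul_set_add)
      finally show ?thesis using T' h1 BsB[of "Suc l"] by blast
    qed
    then obtain T' c' where T': "finite T'" "T' \<subseteq> B" "\<forall>u\<in>T'. u \<in> kerset A \<or> k0 < kv u"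
      "x - (\<Sum>u\<in>T'. c' u *s u) \<in> smul_set p" by blast
    have disj: "T0 \<inter> T' = {}" using T'(3) T(2) by (auto simp: T0_def B1_def)
    define C where "C = (\<lambda>b. if b \<in> T0 then t b * p^(k0 - kv b) else - c' b)"
    have "(\<Sum>b\<in>T0 \<union> T'. C b *s b) = (\<Sum>b\<in>T0. C b *s b) + (\<Sum>b\<in>T'. C b *s b)"
      by (rule sum.union_disjoint[OF T0(1) T'(1) disj])
    also have "(\<Sum>b\<in>T0. C b *s b) = x" unfolding x_def by (rule sum.cong) (auto simp: C_def)
    also have "(\<Sum>b\<in>T'. C b *s b) = (\<Sum>b\<in>T'. - (c' b *s b))"
      by (rule sum.cong) (use disj in \<open>auto simp: C_def vector_smult_lneg\<close>)
    also have "\<dots> = - (\<Sum>b\<in>T'. c' b *s b)" by (simp add: sum_negf)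
    finally have "(\<Sum>b\<in>T0 \<union> T'. C b *s b) \<in> smul_set p" using T'(4) by simp
    moreover have "T0 \<union> T' \<subseteq> B" using T0 T T'(2) by (auto simp: B1_def)
    moreover have "b0 \<in> T0" using b0 by (auto simp: U_def T0_def)
    ultimately have "p dvd C b0" using T0(1) T'(1) by (intro pindD[OF pB, of "T0 \<union> T'" C b0]) auto
    then have "p dvd t b0" using \<open>b0 \<in> T0\<close> b0 by (simp add: C_def)
    then show False using b0 by (simp add: U_def)
  qed
  have cvinj: "inj_on cv B1"
  proof (rule inj_onI)
    fix b b' assume bb: "b \<in> B1" "b' \<in> B1" "cv b = cv b'"
    show "b = b'"
    proof (rule ccontr)
      assume ne: "b \<noteq> b'"
      define t where "t = (\<lambda>x. if x = b then (1::'a) else -1)"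
      have "(\<Sum>x\<in>{b, b'}. t x *s cv x) = 0" using ne bb(3) by (simp add: t_def vector_smult_lneg)
      then have "p dvd t b" using bb ne by (intro indep[rule_format, of "{b, b'}" t b]) auto
      then show False using dvr_pnu[OF dvr] by (simp add: t_def)
    qed
  qed
  define S where "S = cv ` B1"
  have pS: "pind p S" unfolding pind_def
  proof safe
    fix T c t assume T: "finite T" "T \<subseteq> S" and s: "(\<Sum>t\<in>T. c t *s t) \<in> smul_set p" and t: "t \<in> T"
    define T1 where "T1 = {b\<in>B1. cv b \<in> T}"
    have T1: "finite T1" "T1 \<subseteq> B1" "cv ` T1 = T" using finB1 T(2) by (auto simp: T1_def S_def)
    have "(\<Sum>t\<in>T. c t *s t) = (\<Sum>b\<in>T1. c (cv b) *s cv b)"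
      unfolding T1(3)[symmetric] by (rule sum.reindex[unfolded comp_def]) (rule inj_on_subset[OF cvinj T1(2)])
    then have "\<forall>b\<in>T1. p dvd c (cv b)" using indep[OF T1(1,2), of "\<lambda>b. c (cv b)"] s by simp
    moreover obtain b where "b \<in> T1" "t = cv b" using t T1(3) by auto
    ultimately show "p dvd c t" by simp
  qed
  obtain fn :: "nat \<Rightarrow> 'a^'n" where fn: "ibasis ?n fn" using ibasis_std by blast
  have finS: "finite S" using finB1 by (simp add: S_def)
  obtain g2 where g2: "ibasis ?n g2" "S \<subseteq> g2 ` {..<?n}" using exch_ext[OF dvr fn finS pS] by blast
  have g2inj: "inj_on g2 {..<?n}" by (rule ibasis_inj[OF g2(1)])
  define r where "r = card B1"
  have cardS: "card S = r" unfolding S_def r_def by (rule card_image[OF cvinj])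
  have card_g2: "card (g2 ` {..<?n}) = ?n" using g2inj by (simp add: card_image)
  have rn: "r \<le> ?n" using card_mono[OF _ g2(2)] cardS card_g2 by simp
  have rm: "r \<le> ?m" unfolding r_def cardB[symmetric] B1_def by (rule card_mono[OF finB]) auto
  obtain e1 where e1: "bij_betw e1 {..<r} B1" using bij_enum[OF finB1] unfolding r_def by blast
  have B2c: "card B2 = ?m - r"
  proof -
    have "B2 = B - B1" by (auto simp: B1_def B2_def)
    then show ?thesis using finB cardB by (simp add: card_Diff_subset r_def B1_def finite_subset)
  qed
  obtain e2 where e2: "bij_betw e2 {..<?m - r} B2"
    using bij_enum[of B2] finB B2c by (auto simp: B2_def)
  define C3 where "C3 = g2 ` {..<?n} - S"
  have C3c: "card C3 = ?n - r" unfolding C3_def using card_g2 cardS g2(2) finS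
    by (simp add: card_Diff_subset)
  obtain e3 where e3: "bij_betw e3 {..<?n - r} C3"
    using bij_enum[of C3] C3c by (auto simp: C3_def)
  define bbF where "bbF = (\<lambda>j. if j < r then e1 j else e2 (j - r))"
  define ccF where "ccF = (\<lambda>j. if j < r then (cv \<circ> e1) j else e3 (j - r))"
  define dF where "dF = (\<lambda>j. if j < r then p^(kv (e1 j)) else 0)"
  have bbB: "bij_betw bbF {..<?m} (B1 \<union> B2)" unfolding bbF_def
    by (rule bij_piece[OF e1 e2 _ rm]) (auto simp: B1_def B2_def)
  have B12: "B1 \<union> B2 = B" by (auto simp: B1_def B2_def)
  have cvB: "bij_betw cv B1 S" using cvinj by (simp add: bij_betw_def S_def)
  have ccB: "bij_betw ccF {..<?n} (S \<union> C3)" unfolding ccF_def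
    by (rule bij_piece[OF bij_betw_trans[OF e1 cvB] e3 _ rn]) (auto simp: C3_def)
  have SC3: "S \<union> C3 = g2 ` {..<?n}" using g2(2) by (auto simp: C3_def)
  have "snf_pair A bbF ccF dF" unfolding snf_pair_def
  proof (intro conjI allI impI)
    show "inj_on bbF {..<?m}" using bbB by (simp add: bij_betw_def)
    show "rbasis (bbF ` {..<?m})" using bbB B12 rB by (simp add: bij_betw_def)
    show "inj_on ccF {..<?n}" using ccB by (simp add: bij_betw_def)
    show "rbasis (ccF ` {..<?n})" using ccB SC3 ibasis_rbasis[OF g2(1)] by (simp add: bij_betw_def)
  next
    fix j assume j: "j < min ?m ?n"
    show "A *v bbF j = dF j *s ccF j"
    proof (cases "j < r")
      case True then show ?thesis by (simp add: bbF_def ccF_def dF_def cvA)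
    next
      case False
      then have "j - r < ?m - r" using j by auto
      then have "e2 (j - r) \<in> B2" using e2 by (auto simp: bij_betw_def)
      then show ?thesis using False by (simp add: bbF_def dF_def B2_def kerset_def)
    qed
  next
    fix j assume j: "min ?m ?n \<le> j \<and> j < ?m"
    then have "\<not> j < r" "j - r < ?m - r" using rm rn by auto
    then have "e2 (j - r) \<in> B2" using e2 by (auto simp: bij_betw_def)
    then show "A *v bbF j = 0" using \<open>\<not> j < r\<close> by (simp add: bbF_def B2_def kerset_def)
  qed
  moreover have "B = bbF ` {..<?m}" using bbB B12 by (simp add: bij_betw_def)
  ultimately show ?thesis unfolding left_snf_basis_def B_def by blast
qed



lemma kerbasis_indep: "kerbasis A K \<Longrightarrow> T \<subseteq> K \<Longrightarrow> (\<Sum>t\<in>T. c t *s t) = 0 \<Longrightarrow> t \<in> T \<Longrightarrow> c t = 0"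
  unfolding kerbasis_def by blast
lemma kerbasis_span: "kerbasis A K \<Longrightarrow> x \<in> kerset A \<Longrightarrow> \<exists>c. x = (\<Sum>t\<in>K. c t *s t)"
  unfolding kerbasis_def by blast
lemma kerbasis_fin: "kerbasis A K \<Longrightarrow> finite K" unfolding kerbasis_def by blast
lemma kerbasis_sub: "kerbasis A K \<Longrightarrow> K \<subseteq> kerset A" unfolding kerbasis_def by blast

lemma right_part:
  fixes A :: "'a::idom^'m::finite^'n::finite" and p :: 'a and Cs :: "nat \<Rightarrow> ('a^'n) set"
  assumes dvr: "dvr_unif p"
    and PN: "\<And>k z. z \<in> Nset p A k \<Longrightarrow> z \<in> Nset p A l"
    and KB: "kerbasis A K"
    and h1: "\<forall>i\<le>l. Cs i \<subseteq> Nset p A i" and h2: "\<forall>i\<le>l. modp_basis p (Nset p A i) (\<Union>j\<le>i. Cs j)"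
    and h3: "rbasis (\<Union>j\<le>Suc l. Cs j)"
  shows "right_snf_basis A (\<Union>j\<le>Suc l. Cs j)"
proof -
  let ?m = "CARD('m)" and ?n = "CARD('n)"
  define C where "C = (\<Union>j\<le>Suc l. Cs j)"
  have rC: "rbasis C" using h3 by (simp add: C_def)
  have finC: "finite C" and cardC: "card C = ?n" using rbasis_card[OF dvr rC] by auto
  have pC: "pind p C" by (rule rbasis_pind[OF rC])
  define C' where "C' = {c\<in>C. \<exists>i\<le>l. c \<in> Cs i}"
  have C'C: "C' \<subseteq> C" by (auto simp: C'_def)
  define lev where "lev = (\<lambda>c. LEAST i. c \<in> Cs i)"
  have levle: "lev c \<le> j" if "c \<in> Cs j" for c j unfolding lev_def by (rule Least_le) (rule that)
  have levin: "c \<in> Cs (lev c)" and levl: "lev c \<le> l" if cC: "c \<in> C'" for c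
  proof -
    obtain i where i: "i \<le> l" "c \<in> Cs i" using cC by (auto simp: C'_def)
    show "c \<in> Cs (lev c)" unfolding lev_def by (rule LeastI[of _ i]) (rule i(2))
    show "lev c \<le> l" using levle[OF i(2)] i(1) by simp
  qed
  define xv where "xv = (\<lambda>c. SOME x. A *v x = p^(lev c) *s c)"
  have xvA: "A *v xv c = p^(lev c) *s c" if "c \<in> C'" for c
  proof -
    have "c \<in> Nset p A (lev c)" using h1 levin[OF that] levl[OF that] by auto
    then have "\<exists>x. A *v x = p^(lev c) *s c" unfolding Nset_def by blast
    then show ?thesis unfolding xv_def by (rule someI_ex)
  qed
  have p0: "p \<noteq> 0" by (rule dvr_p0[OF dvr])
  have c0: "c \<noteq> 0" if "c \<in> C" for c
  proof
    assume "c = 0"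
    then have "(\<lambda>_. 1::'a) c = 0" using rbasis_indep[OF rC, of "{c}" "\<lambda>_. 1" c] that by simp
    then show False by simp
  qed
  have pc0: "p^k *s c \<noteq> 0" if cC: "c \<in> C" for c k
  proof
    assume "p^k *s c = 0"
    moreover obtain i where "c $ i \<noteq> 0" using c0[OF cC] by (auto simp: vec_eq_iff)
    ultimately show False using p0 by (auto simp: vec_eq_iff)
  qed
  have Q: "\<forall>\<gamma> x. (\<Sum>c\<in>C. \<gamma> c *s c) = A *v x \<longrightarrow>
             (\<forall>c\<in>C. p^(if c \<in> C' then min k (lev c) else k) dvd \<gamma> c)" for k
  proof (induction k)
    case 0 then show ?case by simp
  next
    case (Suc k)
    show ?case
    proof (intro allI impI ballI)
      fix \<gamma> x c assume eq: "(\<Sum>c\<in>C. \<gamma> c *s c) = A *v x" and c: "c \<in> C"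
      define L where "L = {c\<in>C'. lev c \<le> k}"
      have LC: "L \<subseteq> C" using C'C by (auto simp: L_def)
      have IH1: "p^lev b dvd \<gamma> b" if "b \<in> L" for b
        using Suc.IH eq LC that by (force simp: L_def min_def)
      define \<delta> where "\<delta> = (\<lambda>b. SOME e. \<gamma> b = p^lev b * e)"
      have \<delta>: "\<gamma> b = p^lev b * \<delta> b" if "b \<in> L" for b
      proof -
        have "\<exists>e. \<gamma> b = p^lev b * e" using IH1[OF that] by (auto simp: dvd_def)
        then show ?thesis unfolding \<delta>_def by (rule someI_ex)
      qed
      define \<gamma>' where "\<gamma>' = (\<lambda>b. if b \<in> L then 0 else \<gamma> b)"
      define x' where "x' = x - (\<Sum>b\<in>L. \<delta> b *s xv b)"
      have sL: "(\<Sum>b\<in>L. \<gamma> b *s b) = A *v (\<Sum>b\<in>L. \<delta> b *s xv b)"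
        unfolding mv_sum mv_smult
      proof (rule sum.cong)
        fix b assume b: "b \<in> L"
        then have "b \<in> C'" by (simp add: L_def)
        then show "\<gamma> b *s b = \<delta> b *s (A *v xv b)" using \<delta>[OF b] by (simp add: xvA smult_assoc mult.commute)
      qed simp
      have "(\<Sum>b\<in>C. \<gamma> b *s b) = (\<Sum>b\<in>C. \<gamma>' b *s b) + (\<Sum>b\<in>C. (if b \<in> L then \<gamma> b else 0) *s b)"
        unfolding sum.distrib[symmetric] by (rule sum.cong) (auto simp: \<gamma>'_def)
      also have "(\<Sum>b\<in>C. (if b \<in> L then \<gamma> b else 0) *s b) = (\<Sum>b\<in>L. \<gamma> b *s b)"
        by (rule sum_extend[OF finC LC])
      finally have eq': "(\<Sum>b\<in>C. \<gamma>' b *s b) = A *v x'"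
        using eq sL by (simp add: x'_def matrix_vector_mult_diff_distrib)
      have pk: "p^k dvd \<gamma>' b" if "b \<in> C" for b
      proof (cases "b \<in> L")
        case True then show ?thesis by (simp add: \<gamma>'_def)
      next
        case False
        have "p^(if b \<in> C' then min k (lev b) else k) dvd \<gamma>' b" using Suc.IH eq' that by blast
        moreover have "(if b \<in> C' then min k (lev b) else k) = k" using False by (auto simp: L_def)
        ultimately show ?thesis by simp
      qed
      define \<epsilon> where "\<epsilon> = (\<lambda>b. SOME e. \<gamma>' b = p^k * e)"
      have \<epsilon>: "\<gamma>' b = p^k * \<epsilon> b" if "b \<in> C" for b
      proof -
        have "\<exists>e. \<gamma>' b = p^k * e" using pk[OF that] by (auto simp: dvd_def)
        then show ?thesis unfolding \<epsilon>_def by (rule someI_ex)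
      qed
      define z where "z = (\<Sum>b\<in>C. \<epsilon> b *s b)"
      have "p^k *s z = (\<Sum>b\<in>C. \<gamma>' b *s b)" unfolding z_def smult_sum_right smult_assoc
        by (rule sum.cong) (auto simp: \<epsilon>)
      then have Ax': "A *v x' = p^k *s z" using eq' by simp
      then have "x' \<in> Mset p A k" by (simp add: Mset_def smul_set_self)
      then have zk: "z \<in> Nset p A k" using Ax' unfolding Nset_def by blast
      define kk where "kk = min k l"
      have zkk: "z \<in> Nset p A kk"
      proof (cases "k \<le> l")
        case True then show ?thesis using zk by (simp add: kk_def)
      next
        case False then show ?thesis using PN[OF zk] by (simp add: kk_def)
      qed
      have mbk: "modp_basis p (Nset p A kk) (\<Union>j\<le>kk. Cs j)" using h2 by (simp add: kk_def)
      obtain T'' \<mu> where T'': "finite T''" "T'' \<subseteq> (\<Union>j\<le>kk. Cs j)" "z - (\<Sum>b\<in>T''. \<mu> b *s b) \<in> smul_set p"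
        using modp_span[OF mbk zkk] by blast
      have T''L: "T'' \<subseteq> L"
      proof
        fix b assume "b \<in> T''"
        then obtain j where j: "j \<le> kk" "b \<in> Cs j" using T''(2) by blast
        have "j \<le> l" "j \<le> k" using j(1) by (auto simp: kk_def)
        then have "b \<in> C'" using j by (auto simp: C'_def C_def)
        moreover have "lev b \<le> k" using levle[OF j(2)] \<open>j \<le> k\<close> by simp
        ultimately show "b \<in> L" by (simp add: L_def)
      qed
      have "(\<Sum>b\<in>C. (\<epsilon> b - (if b \<in> T'' then \<mu> b else 0)) *s b) = z - (\<Sum>b\<in>T''. \<mu> b *s b)"
        unfolding z_def smult_diff_left sum_subtractf using sum_extend[OF finC, of T'' \<mu>] T''L LC by auto
      then have "(\<Sum>b\<in>C. (\<epsilon> b - (if b \<in> T'' then \<mu> b else 0)) *s b) \<in> smul_set p" using T''(3) by simp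
      then have pe: "p dvd \<epsilon> b - (if b \<in> T'' then \<mu> b else 0)" if "b \<in> C" for b
        using pindD[OF pC finC subset_refl _ that, of "\<lambda>b. \<epsilon> b - (if b \<in> T'' then \<mu> b else 0)"] by blast
      show "p^(if c \<in> C' then min (Suc k) (lev c) else Suc k) dvd \<gamma> c"
      proof (cases "c \<in> L")
        case True
        then have "(if c \<in> C' then min (Suc k) (lev c) else Suc k) = lev c" by (auto simp: L_def)
        then show ?thesis using IH1[OF True] by simp
      next
        case False
        then have "c \<notin> T''" using T''L by auto
        then have "p dvd \<epsilon> c" using pe[OF c] by simp
        then have "p^Suc k dvd p^k * \<epsilon> c" by (simp add: mult_dvd_mono)
        moreover have "\<gamma> c = p^k * \<epsilon> c" using \<epsilon>[OF c] False by (simp add: \<gamma>'_def)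
        moreover have "(if c \<in> C' then min (Suc k) (lev c) else Suc k) = Suc k" using False by (auto simp: L_def)
        ultimately show ?thesis by simp
      qed
    qed
  qed
  define X where "X = xv ` C'"
  have finC': "finite C'" using finC C'C finite_subset by blast
  have finX: "finite X" using finC' by (simp add: X_def)
  have finK: "finite K" by (rule kerbasis_fin[OF KB])
  have KA: "K \<subseteq> kerset A" by (rule kerbasis_sub[OF KB])
  have xvinj: "inj_on xv C'"
  proof (rule inj_onI)
    fix a b assume ab: "a \<in> C'" "b \<in> C'" "xv a = xv b"
    show "a = b"
    proof (rule ccontr)
      assume ne: "a \<noteq> b"
      define t where "t = (\<lambda>y. if y = a then p^lev a else - (p^lev b))"
      have "p^lev a *s a = p^lev b *s b" using xvA ab by metis
      then have "(\<Sum>y\<in>{a, b}. t y *s y) = 0" using ne by (simp add: t_def vector_smult_lneg)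
      then have "t a = 0" using ab C'C by (intro rbasis_indep[OF rC, of "{a, b}" t a]) auto
      then show False using p0 by (simp add: t_def)
    qed
  qed
  have XK: "X \<inter> K = {}"
  proof -
    have "xv c \<notin> kerset A" if "c \<in> C'" for c
      using xvA[OF that] pc0[of c "lev c"] that C'C by (auto simp: kerset_def)
    then show ?thesis using KA by (auto simp: X_def)
  qed
  have rXK: "rbasis (X \<union> K)" unfolding rbasis_def
  proof (intro conjI allI impI)
    fix T c assume T: "finite T \<and> T \<subseteq> X \<union> K \<and> (\<Sum>t\<in>T. c t *s t) = 0"
    define TX where "TX = T \<inter> X"
    define TK where "TK = T \<inter> K"
    have TXK: "T = TX \<union> TK" "TX \<inter> TK = {}" "finite TX" "finite TK" using T XK by (auto simp: TX_def TK_def)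
    define TC where "TC = {b\<in>C'. xv b \<in> TX}"
    have TC: "finite TC" "TC \<subseteq> C'" "xv ` TC = TX" using finC' by (auto simp: TC_def TX_def X_def)
    have "0 = A *v (\<Sum>t\<in>T. c t *s t)" using T by simp
    also have "\<dots> = (\<Sum>t\<in>TX. c t *s (A *v t)) + (\<Sum>t\<in>TK. c t *s (A *v t))"
      unfolding mv_sum mv_smult TXK(1) by (rule sum.union_disjoint) (use TXK in auto)
    also have "(\<Sum>t\<in>TK. c t *s (A *v t)) = 0"
      by (rule sum.neutral) (use KA in \<open>auto simp: TK_def kerset_def\<close>)
    also have "(\<Sum>t\<in>TX. c t *s (A *v t)) = (\<Sum>b\<in>TC. c (xv b) *s (A *v xv b))"
      unfolding TC(3)[symmetric] by (rule sum.reindex[unfolded comp_def]) (rule inj_on_subset[OF xvinj TC(2)])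
    also have "\<dots> = (\<Sum>b\<in>TC. (c (xv b) * p^lev b) *s b)"
      by (rule sum.cong) (use TC in \<open>auto simp: xvA smult_assoc\<close>)
    finally have s0: "(\<Sum>b\<in>TC. (c (xv b) * p^lev b) *s b) = 0" by simp
    have cX: "c t = 0" if tX: "t \<in> TX" for t
    proof -
      obtain b where b: "b \<in> TC" "t = xv b" using tX TC(3) by auto
      have "c (xv b) * p^lev b = 0"
        by (rule rbasis_indep[OF rC TC(1) _ s0 b(1)]) (use TC C'C in auto)
      then show ?thesis using b p0 by simp
    qed
    have "(\<Sum>t\<in>T. c t *s t) = (\<Sum>t\<in>TX. c t *s t) + (\<Sum>t\<in>TK. c t *s t)"
      unfolding TXK(1) by (rule sum.union_disjoint) (use TXK in auto)
    also have "(\<Sum>t\<in>TX. c t *s t) = 0" by (rule sum.neutral) (simp add: cX)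
    finally have sK: "(\<Sum>t\<in>TK. c t *s t) = 0" using T by simp
    show "\<forall>t\<in>T. c t = 0"
    proof
      fix t assume "t \<in> T"
      then have "t \<in> TX \<or> t \<in> TK" using TXK by auto
      then show "c t = 0"
      proof
        assume "t \<in> TK" then show ?thesis using kerbasis_indep[OF KB _ sK] by (auto simp: TK_def)
      qed (rule cX)
    qed
  next
    fix x
    obtain T0 \<gamma>0 where T0: "finite T0" "T0 \<subseteq> C" "A *v x = (\<Sum>t\<in>T0. \<gamma>0 t *s t)"
      using rbasis_span[OF rC] by blast
    define \<gamma> where "\<gamma> = (\<lambda>t. if t \<in> T0 then \<gamma>0 t else 0)"
    have eq: "(\<Sum>c\<in>C. \<gamma> c *s c) = A *v x" unfolding \<gamma>_def T0(3) by (rule sum_extend[OF finC T0(2)])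
    have g0: "\<gamma> c = 0" if "c \<in> C" "c \<notin> C'" for c
    proof (rule dvr_allpow[OF dvr], rule allI)
      fix k have "p^(if c \<in> C' then min k (lev c) else k) dvd \<gamma> c" using Q[of k] eq that by blast
      then show "p^k dvd \<gamma> c" using that by simp
    qed
    have gd: "p^lev c dvd \<gamma> c" if cC': "c \<in> C'" for c
    proof -
      have "p^(if c \<in> C' then min (lev c) (lev c) else lev c) dvd \<gamma> c" using Q[of "lev c"] eq cC' C'C by blast
      then show ?thesis using cC' by simp
    qed
    define \<delta> where "\<delta> = (\<lambda>b. SOME e. \<gamma> b = p^lev b * e)"
    have \<delta>: "\<gamma> b = p^lev b * \<delta> b" if "b \<in> C'" for b
    proof -
      have "\<exists>e. \<gamma> b = p^lev b * e" using gd[OF that] by (auto simp: dvd_def)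
      then show ?thesis unfolding \<delta>_def by (rule someI_ex)
    qed
    define y where "y = (\<Sum>b\<in>C'. \<delta> b *s xv b)"
    have "A *v y = (\<Sum>b\<in>C'. \<gamma> b *s b)" unfolding y_def mv_sum mv_smult
      by (rule sum.cong) (auto simp: xvA \<delta> smult_assoc mult.commute)
    also have "\<dots> = (\<Sum>b\<in>C. \<gamma> b *s b)"
      by (rule sum.mono_neutral_left[OF finC C'C]) (auto simp: g0)
    finally have "A *v (x - y) = 0" using eq by (simp add: matrix_vector_mult_diff_distrib)
    then obtain \<kappa> where \<kappa>: "x - y = (\<Sum>t\<in>K. \<kappa> t *s t)" using kerbasis_span[OF KB] by (auto simp: kerset_def)
    define co where "co = (\<lambda>t. if t \<in> X then \<delta> (inv_into C' xv t) else \<kappa> t)"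
    have "y = (\<Sum>t\<in>X. co t *s t)" unfolding y_def X_def
      by (subst sum.reindex[OF xvinj]) (auto simp: co_def inv_into_f_f[OF xvinj] X_def intro!: sum.cong)
    moreover have "(\<Sum>t\<in>K. \<kappa> t *s t) = (\<Sum>t\<in>K. co t *s t)"
      by (rule sum.cong) (use XK in \<open>auto simp: co_def\<close>)
    ultimately have "x = (\<Sum>t\<in>X \<union> K. co t *s t)"
      using \<kappa> by (simp add: sum.union_disjoint[OF finX finK XK] algebra_simps)
    then show "\<exists>T c. finite T \<and> T \<subseteq> X \<union> K \<and> x = (\<Sum>t\<in>T. c t *s t)"
      using finX finK by blast
  qed
  have finXK: "finite (X \<union> K)" and cardXK: "card (X \<union> K) = ?m" using rbasis_card[OF dvr rXK] by auto
  define r where "r = card C'"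
  have cardX: "card X = r" unfolding X_def r_def by (rule card_image[OF xvinj])
  have cardK: "card K = ?m - r" using cardXK card_Un_disjoint[OF finX finK XK] cardX by simp
  have rm: "r \<le> ?m" using cardXK card_Un_disjoint[OF finX finK XK] cardX by simp
  have rn: "r \<le> ?n" unfolding r_def cardC[symmetric] by (rule card_mono[OF finC C'C])
  obtain e1 where e1: "bij_betw e1 {..<r} C'" using bij_enum[OF finC'] unfolding r_def by blast
  obtain e2 where e2: "bij_betw e2 {..<?m - r} K" using bij_enum[OF finK] cardK by auto
  have cCC: "card (C - C') = ?n - r" using cardC finC' C'C by (simp add: card_Diff_subset r_def)
  obtain e3 where e3: "bij_betw e3 {..<?n - r} (C - C')" using bij_enum[of "C - C'"] finC cCC by auto
  have xvB: "bij_betw xv C' X" using xvinj by (simp add: bij_betw_def X_def)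
  define bbF where "bbF = (\<lambda>j. if j < r then (xv \<circ> e1) j else e2 (j - r))"
  define ccF where "ccF = (\<lambda>j. if j < r then e1 j else e3 (j - r))"
  define dF where "dF = (\<lambda>j. if j < r then p^(lev (e1 j)) else 0)"
  have bbB: "bij_betw bbF {..<?m} (X \<union> K)" unfolding bbF_def
    by (rule bij_piece[OF bij_betw_trans[OF e1 xvB] e2 XK rm])
  have ccB: "bij_betw ccF {..<?n} (C' \<union> (C - C'))" unfolding ccF_def
    by (rule bij_piece[OF e1 e3 _ rn]) auto
  have CC: "C' \<union> (C - C') = C" using C'C by auto
  have e1C: "e1 j \<in> C'" if "j < r" for j using e1 that by (auto simp: bij_betw_def)
  have "snf_pair A bbF ccF dF" unfolding snf_pair_def
  proof (intro conjI allI impI)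
    show "inj_on bbF {..<?m}" using bbB by (simp add: bij_betw_def)
    show "rbasis (bbF ` {..<?m})" using bbB rXK by (simp add: bij_betw_def)
    show "inj_on ccF {..<?n}" using ccB by (simp add: bij_betw_def)
    show "rbasis (ccF ` {..<?n})" using ccB CC rC by (simp add: bij_betw_def)
  next
    fix j assume j: "j < min ?m ?n"
    show "A *v bbF j = dF j *s ccF j"
    proof (cases "j < r")
      case True then show ?thesis by (simp add: bbF_def ccF_def dF_def xvA e1C)
    next
      case False
      then have "j - r < ?m - r" using j by auto
      then have "e2 (j - r) \<in> K" using e2 by (auto simp: bij_betw_def)
      then show ?thesis using False KA by (auto simp: bbF_def dF_def kerset_def)
    qed
  next
    fix j assume j: "min ?m ?n \<le> j \<and> j < ?m"
    then have "\<not> j < r" "j - r < ?m - r" using rm rn by auto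
    then have "e2 (j - r) \<in> K" using e2 by (auto simp: bij_betw_def)
    then show "A *v bbF j = 0" using \<open>\<not> j < r\<close> KA by (auto simp: bbF_def kerset_def)
  qed
  moreover have "C = ccF ` {..<?n}" using ccB CC by (simp add: bij_betw_def)
  ultimately show ?thesis unfolding right_snf_basis_def C_def by blast
qed



theorem lemma2:
  fixes p :: "'a::idom" and A :: "'a ^ 'm::finite ^ 'n::finite" and l :: nat
  assumes "dvr_unif p"
    and "A \<noteq> 0"
    and "elem_div_mult p A l \<noteq> 0"
    and "\<forall>i>l. elem_div_mult p A i = 0"
  shows "(\<forall>Bs :: nat \<Rightarrow> ('a ^ 'm) set.
            Bs (Suc l) \<subseteq> kerset A \<and> (\<forall>i\<le>l. Bs i \<subseteq> Mset p A i) \<and>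
            modp_basis p (kerset A) (Bs (Suc l)) \<and>
            (\<forall>i\<le>l. modp_basis p (Mset p A i) (\<Union>j\<in>{i..Suc l}. Bs j))
            \<longrightarrow> left_snf_basis A (\<Union>j\<le>Suc l. Bs j))
       \<and> (\<forall>Cs :: nat \<Rightarrow> ('a ^ 'n) set.
            (\<forall>i\<le>l. Cs i \<subseteq> Nset p A i) \<and>
            (\<forall>i\<le>l. modp_basis p (Nset p A i) (\<Union>j\<le>i. Cs j)) \<and>
            rbasis (\<Union>j\<le>Suc l. Cs j)
            \<longrightarrow> right_snf_basis A (\<Union>j\<le>Suc l. Cs j))"
proof -
  obtain bb cc d where G: "good_snf p l A bb cc d" using good_snf_exists[OF assms(1) assms(4)] by blast
  obtain K where K: "kerbasis A K" using good_ker[OF G] by blast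
  show ?thesis
  proof (intro conjI allI impI)
    fix Bs :: "nat \<Rightarrow> ('a ^ 'm) set"
    assume h: "Bs (Suc l) \<subseteq> kerset A \<and> (\<forall>i\<le>l. Bs i \<subseteq> Mset p A i) \<and>
            modp_basis p (kerset A) (Bs (Suc l)) \<and>
            (\<forall>i\<le>l. modp_basis p (Mset p A i) (\<Union>j\<in>{i..Suc l}. Bs j))"
    show "left_snf_basis A (\<Union>j\<le>Suc l. Bs j)"
      by (rule left_part[OF assms(1) good_Pl[OF assms(1) G]]) (use h in auto)
  next
    fix Cs :: "nat \<Rightarrow> ('a ^ 'n) set"
    assume h: "(\<forall>i\<le>l. Cs i \<subseteq> Nset p A i) \<and>
            (\<forall>i\<le>l. modp_basis p (Nset p A i) (\<Union>j\<le>i. Cs j)) \<and>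
            rbasis (\<Union>j\<le>Suc l. Cs j)"
    show "right_snf_basis A (\<Union>j\<le>Suc l. Cs j)"
      by (rule right_part[OF assms(1) good_PN[OF assms(1) G] K]) (use h in auto)
  qed
qed

end
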